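(* Let $X_1,\dots,X_n,Y_1,\dots,Y_n$ be operators in a complex Hilbert space $\mathcal{H}$, each Hermitian or skew-Hermitian, defined on a common invariant domain $D$, such that on $D$: $[X_i,X_j]=[Y_i,Y_j]=0$ for all $i,j\in\{1,\dots,n\}$, $[X_i,Y_j]=0$ for all $i\neq j$, and $[X_i,Y_i]=c_iI$ with $c_i\in\mathbb{C}\setminus\{0\}$ for all $i\in\{1,\dots,n\}$. Let $m^{(1)},\dots,m^{(n)},q^{(1)},\dots,q^{(n)}$ be sequences of positive numbers satisfying (A0), (A1), (A2), and assume that for every $i\in\{1,\dots,n\}$ the pair $(m^{(i)},q^{(i)})$ satisfies (A3). Put $\mathbf{X}=(X_1,\dots,X_n)$, $\mathbf{Y}=(Y_1,\dots,Y_n)$, $\mathbf{m}=(m^{(1)},\dots,m^{(n)})$, $\mathbf{q}=(q^{(1)},\dots,q^{(n)})$. Then for $u\in D$ the following are equivalent: (i) $u\in\mathcal{S}_{(m^{(1)},\dots,m^{(n)},q^{(1)},\dots,q^{(n)})}(X_1,\dots,X_n,Y_1,\dots,Y_n)$; (ii) $u\in\mathcal{S}_{\mathbf{m}}(\mathbf{X})\cap\mathcal{S}_{\mathbf{q}}(\mathbf{Y})$; (iii) $u\in\left(\bigcap_{i=1}^n\mathcal{S}_{m^{(i)}}(X_i)\right)\cap\left(\bigcap_{i=1}^n\mathcal{S}_{q^{(i)}}(Y_i)\right)$.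
   Context: A common invariant domain $D$ means $D$ is contained in the domain of each operator and is mapped into itself by each operator. Notation: for $N\ge1$, $M(N)=\bigcup_{k\ge1}\{1,\dots,N\}^k$; for $\alpha=(i_1,\dots,i_k)$, $|\alpha|=k$, $|\alpha|_j=\mathrm{card}\{l:i_l=j\}$. For operators $\mathbf{Z}=(Z_1,\dots,Z_N)$, $\mathbf{Z}_\alpha=Z_{i_1}\cdots Z_{i_k}$ and $C^\infty(\mathbf{Z})=\{u: u\in\mathrm{Dom}(\mathbf{Z}_\alpha)\ \forall\alpha\in M(N)\}$. For sequences $\mathbf{p}=(p^{(1)},\dots,p^{(N)})$ of positive reals, $\mathbf{p}_\alpha=p^{(1)}_{|\alpha|_1}\cdots p^{(N)}_{|\alpha|_N}$ and $\mathcal{S}_{\mathbf{p}}(\mathbf{Z})=\{u\in C^\infty(\mathbf{Z}):\exists A,C>0,\ \|\mathbf{Z}_\alpha u\|\le CA^{|\alpha|}\mathbf{p}_\alpha\ \forall\alpha\in M(N)\}$ (for a single operator $Z$ and sequence $p$: $\|Z^ku\|\le CA^kp_k$ for all $k\ge1$). Conditions on a sequence $m$: (A0) $m_0=m_1=1$; (A1) $m_p^2\le m_{p-1}m_{p+1}$ for $p\ge1$; (A2) there is $H>0$ (common to all sequences considered) with $m_{p+q}\le H^{p+q}m_pm_q$ for all $p,q\in\mathbb{N}$. A pair $(m,q)$ satisfies (A3) if there is $L\ge1$ with $p\,m_{p-1}q_{p-1}\le L\,m_pq_p$ for all $p\ge1$. *)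

theory Defs
  imports "HOL-Analysis.Analysis"
begin

class complex_vector = real_vector +
  fixes scaleC :: "complex \<Rightarrow> 'a \<Rightarrow> 'a" (infixr \<open>*\<^sub>C\<close> 75)
  assumes scaleC_add_right: "a *\<^sub>C (x + y) = a *\<^sub>C x + a *\<^sub>C y"
    and scaleC_add_left: "(a + b) *\<^sub>C x = a *\<^sub>C x + b *\<^sub>C x"
    and scaleC_scaleC: "a *\<^sub>C (b *\<^sub>C x) = (a * b) *\<^sub>C x"
    and scaleC_one: "1 *\<^sub>C x = x"
    and scaleR_scaleC: "scaleR r x = complex_of_real r *\<^sub>C x"

class complex_inner = complex_vector + real_normed_vector +
  fixes cinner :: "'a \<Rightarrow> 'a \<Rightarrow> complex"
  assumes cinner_commute: "cinner x y = cnj (cinner y x)"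
    and cinner_add_left: "cinner (x + y) z = cinner x z + cinner y z"
    and cinner_scaleC_left: "cinner (r *\<^sub>C x) y = cnj r * cinner x y"
    and cinner_self_real_nonneg: "Im (cinner x x) = 0 \<and> Re (cinner x x) \<ge> 0"
    and cinner_eq_zero_iff: "cinner x x = 0 \<longleftrightarrow> x = 0"
    and norm_eq_sqrt_cinner: "norm x = sqrt (Re (cinner x x))"

class chilbert_space = complex_inner + complete_space

definition csubspace :: "'a::complex_vector set \<Rightarrow> bool" where
  "csubspace S \<longleftrightarrow> 0 \<in> S \<and> (\<forall>x\<in>S. \<forall>y\<in>S. x + y \<in> S) \<and> (\<forall>c. \<forall>x\<in>S. c *\<^sub>C x \<in> S)"

definition lin_op :: "'a::complex_vector set \<Rightarrow> ('a \<Rightarrow> 'a) \<Rightarrow> bool" where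
  "lin_op Dom Z \<longleftrightarrow> csubspace Dom \<and>
     (\<forall>x\<in>Dom. \<forall>y\<in>Dom. Z (x + y) = Z x + Z y) \<and> (\<forall>c. \<forall>x\<in>Dom. Z (c *\<^sub>C x) = c *\<^sub>C Z x)"

definition hermitian :: "'a::complex_inner set \<Rightarrow> ('a \<Rightarrow> 'a) \<Rightarrow> bool" where
  "hermitian Dom Z \<longleftrightarrow> (\<forall>u\<in>Dom. \<forall>v\<in>Dom. cinner (Z u) v = cinner u (Z v))"

definition skew_hermitian :: "'a::complex_inner set \<Rightarrow> ('a \<Rightarrow> 'a) \<Rightarrow> bool" where
  "skew_hermitian Dom Z \<longleftrightarrow> (\<forall>u\<in>Dom. \<forall>v\<in>Dom. cinner (Z u) v = - cinner u (Z v))"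

definition common_invariant_domain ::
    "'a::complex_vector set \<Rightarrow> nat set \<Rightarrow> (nat \<Rightarrow> 'a set) \<Rightarrow> (nat \<Rightarrow> 'a \<Rightarrow> 'a) \<Rightarrow> bool" where
  "common_invariant_domain D I Dom Z \<longleftrightarrow> csubspace D \<and> (\<forall>i\<in>I. D \<subseteq> Dom i \<and> Z i ` D \<subseteq> D)"

definition multi_indices :: "nat \<Rightarrow> nat list set" where
  "multi_indices N = {\<alpha>. \<alpha> \<noteq> [] \<and> set \<alpha> \<subseteq> {1..N}}"

definition count_idx :: "nat list \<Rightarrow> nat \<Rightarrow> nat" where
  "count_idx \<alpha> j = length (filter (\<lambda>i. i = j) \<alpha>)"

text \<open>Z_alpha = Z_{i1} ... Z_{ik} (the rightmost factor acts first).\<close>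
fun op_word :: "(nat \<Rightarrow> 'a \<Rightarrow> 'a) \<Rightarrow> nat list \<Rightarrow> 'a \<Rightarrow> 'a" where
  "op_word Z [] u = u"
| "op_word Z (i # \<alpha>) u = Z i (op_word Z \<alpha> u)"

fun in_dom_word :: "(nat \<Rightarrow> 'a set) \<Rightarrow> (nat \<Rightarrow> 'a \<Rightarrow> 'a) \<Rightarrow> nat list \<Rightarrow> 'a \<Rightarrow> bool" where
  "in_dom_word Dom Z [] u = True"
| "in_dom_word Dom Z (i # \<alpha>) u = (in_dom_word Dom Z \<alpha> u \<and> op_word Z \<alpha> u \<in> Dom i)"

definition C_infty :: "nat \<Rightarrow> (nat \<Rightarrow> 'a set) \<Rightarrow> (nat \<Rightarrow> 'a \<Rightarrow> 'a) \<Rightarrow> 'a set" where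
  "C_infty N Dom Z = {u. \<forall>\<alpha>\<in>multi_indices N. in_dom_word Dom Z \<alpha> u}"

definition p_word :: "nat \<Rightarrow> (nat \<Rightarrow> nat \<Rightarrow> real) \<Rightarrow> nat list \<Rightarrow> real" where
  "p_word N p \<alpha> = (\<Prod>j=1..N. p j (count_idx \<alpha> j))"

definition S_class :: "nat \<Rightarrow> (nat \<Rightarrow> 'a::real_normed_vector set) \<Rightarrow> (nat \<Rightarrow> 'a \<Rightarrow> 'a)
    \<Rightarrow> (nat \<Rightarrow> nat \<Rightarrow> real) \<Rightarrow> 'a set" where
  "S_class N Dom Z p = {u \<in> C_infty N Dom Z. \<exists>A>0. \<exists>C>0. \<forall>\<alpha>\<in>multi_indices N.
      norm (op_word Z \<alpha> u) \<le> C * A ^ length \<alpha> * p_word N p \<alpha>}"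

definition S_single :: "'a::real_normed_vector set \<Rightarrow> ('a \<Rightarrow> 'a) \<Rightarrow> (nat \<Rightarrow> real) \<Rightarrow> 'a set" where
  "S_single Dom Z p = {u. (\<forall>k. \<forall>j<k. (Z ^^ j) u \<in> Dom) \<and>
      (\<exists>A>0. \<exists>C>0. \<forall>k\<ge>1. norm ((Z ^^ k) u) \<le> C * A ^ k * p k)}"

definition cond_A0 :: "(nat \<Rightarrow> real) \<Rightarrow> bool" where
  "cond_A0 m \<longleftrightarrow> m 0 = 1 \<and> m 1 = 1"

definition cond_A1 :: "(nat \<Rightarrow> real) \<Rightarrow> bool" where
  "cond_A1 m \<longleftrightarrow> (\<forall>p\<ge>1. (m p)\<^sup>2 \<le> m (p - 1) * m (p + 1))"

definition cond_A2 :: "real \<Rightarrow> (nat \<Rightarrow> real) \<Rightarrow> bool" where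
  "cond_A2 H m \<longleftrightarrow> (\<forall>p q. m (p + q) \<le> H ^ (p + q) * m p * m q)"

definition cond_A3 :: "(nat \<Rightarrow> real) \<Rightarrow> (nat \<Rightarrow> real) \<Rightarrow> bool" where
  "cond_A3 m q \<longleftrightarrow> (\<exists>L\<ge>1. \<forall>p\<ge>1. real p * m (p - 1) * q (p - 1) \<le> L * m p * q p)"

definition join_tuple :: "nat \<Rightarrow> (nat \<Rightarrow> 'b) \<Rightarrow> (nat \<Rightarrow> 'b) \<Rightarrow> nat \<Rightarrow> 'b" where
  "join_tuple n F G i = (if i \<le> n then F i else G (i - n))"

end

theory Submission
  imports Defs
begin

lemma cinner_zero_left[simp]: "cinner (0::'a::complex_inner) y = 0"
proof -
  have "cinner (0 + 0::'a) y = cinner 0 y + cinner 0 y" by (rule cinner_add_left)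
  thus ?thesis by simp
qed

lemma cinner_add_right: "cinner (x::'a::complex_inner) (y + z) = cinner x y + cinner x z"
  by (metis cinner_add_left cinner_commute complex_cnj_add)

lemma cinner_scaleC_right: "cinner (x::'a::complex_inner) (r *\<^sub>C y) = r * cinner x y"
  by (metis cinner_commute cinner_scaleC_left complex_cnj_cnj complex_cnj_mult)

lemma cinner_scaleR_left: "cinner (r *\<^sub>R (x::'a::complex_inner)) y = complex_of_real r * cinner x y"
  by (simp add: scaleR_scaleC cinner_scaleC_left)

lemma cinner_minus_left: "cinner (- (x::'a::complex_inner)) y = - cinner x y"
  using cinner_scaleR_left[of "-1" x y] by simp

lemma cinner_diff_left: "cinner ((x::'a::complex_inner) - y) z = cinner x z - cinner y z"
  using cinner_add_left[of x "-y" z] by (simp add: cinner_minus_left)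

lemma cinner_self_eq: "cinner (x::'a::complex_inner) x = complex_of_real ((norm x)^2)"
proof -
  have "Im (cinner x x) = 0" "Re (cinner x x) \<ge> 0" using cinner_self_real_nonneg by auto
  moreover have "(norm x)^2 = Re (cinner x x)" using norm_eq_sqrt_cinner[of x] \<open>Re (cinner x x) \<ge> 0\<close> by simp
  ultimately show ?thesis by (simp add: complex_eq_iff)
qed

lemma scaleC_zero_right[simp]: "r *\<^sub>C (0::'a::complex_vector) = 0"
  by (metis add_cancel_right_right scaleC_add_right)

lemma norm_scaleC: "norm (r *\<^sub>C (x::'a::complex_inner)) = cmod r * norm x"
proof -
  have "cinner (r *\<^sub>C x) (r *\<^sub>C x) = cnj r * r * cinner x x"
    by (simp add: cinner_scaleC_left cinner_scaleC_right mult_ac)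
  hence "complex_of_real ((norm (r *\<^sub>C x))^2) = cnj r * r * complex_of_real ((norm x)^2)"
    by (simp only: cinner_self_eq)
  also have "cnj r * r = complex_of_real ((cmod r)^2)" by (metis complex_norm_square mult.commute)
  finally have "(norm (r *\<^sub>C x))^2 = (cmod r * norm x)^2"
    by (metis of_real_eq_iff of_real_mult power_mult_distrib)
  thus ?thesis by (simp add: power2_eq_iff_nonneg)
qed

lemma Re_cinner_expand:
  "Re (cinner ((x::'a::complex_inner) + s *\<^sub>R y) (x + s *\<^sub>R y)) = (norm x)^2 + 2 * s * Re (cinner x y) + s^2 * (norm y)^2"
proof -
  have c: "Re (cinner y x) = Re (cinner x y)" by (subst cinner_commute) simp
  have "cinner (x + s *\<^sub>R y) (x + s *\<^sub>R y) = cinner x x + complex_of_real s * cinner x y + complex_of_real s * cinner y x + complex_of_real s * complex_of_real s * cinner y y"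
    by (simp only: cinner_add_left cinner_add_right cinner_scaleR_left scaleR_scaleC cinner_scaleC_right cinner_scaleC_left complex_cnj_complex_of_real distrib_left mult.assoc add.assoc; simp add: add_ac)
  hence "Re (cinner (x + s *\<^sub>R y) (x + s *\<^sub>R y)) = Re (cinner x x) + s * Re (cinner x y) + s * Re (cinner y x) + s * s * Re (cinner y y)"
    by simp
  thus ?thesis using c by (simp add: cinner_self_eq power2_eq_square)
qed

lemma Re_CS: "(Re (cinner (x::'a::complex_inner) y))^2 \<le> (norm x)^2 * (norm y)^2"
proof (cases "y = 0")
  case True thus ?thesis by (simp add: cinner_commute[of x])
next
  case False
  hence ny: "(norm y)^2 > 0" by simp
  define b where "b = Re (cinner x y)"
  define t where "t = - b / (norm y)^2"
  have "0 \<le> Re (cinner (x + t *\<^sub>R y) (x + t *\<^sub>R y))"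
    using cinner_self_real_nonneg by blast
  also have "\<dots> = (norm x)^2 + 2 * t * b + t^2 * (norm y)^2" unfolding b_def by (rule Re_cinner_expand)
  also have "t^2 * (norm y)^2 = b^2 / (norm y)^2"
    using ny by (simp add: t_def power2_eq_square)
  also have "2 * t * b = - 2 * (b^2 / (norm y)^2)"
    by (simp add: t_def power2_eq_square)
  finally have "b^2 / (norm y)^2 \<le> (norm x)^2" by simp
  hence "b^2 \<le> (norm x)^2 * (norm y)^2" using ny by (simp add: pos_divide_le_eq)
  thus ?thesis by (simp add: b_def)
qed

lemma Re_CS': "Re (cinner (x::'a::complex_inner) y) \<le> norm x * norm y"
proof -
  have "(Re (cinner x y))^2 \<le> (norm x * norm y)^2" using Re_CS by (simp add: power_mult_distrib)
  hence "\<bar>Re (cinner x y)\<bar>^2 \<le> (norm x * norm y)^2" by simp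
  hence "\<bar>Re (cinner x y)\<bar> \<le> norm x * norm y"
    by (rule power2_le_imp_le) simp
  thus ?thesis by simp
qed

lemma CS: "cmod (cinner (x::'a::complex_inner) y) \<le> norm x * norm y"
proof (cases "cinner x y = 0")
  case True thus ?thesis by simp
next
  case False
  define w where "w = cinner x y / complex_of_real (cmod (cinner x y))"
  have wm: "cmod w = 1" using False by (simp add: w_def norm_divide)
  have "cinner (w *\<^sub>C x) y = cnj w * cinner x y" by (rule cinner_scaleC_left)
  also have "\<dots> = complex_of_real (cmod (cinner x y))"
    using False by (simp add: w_def complex_norm_square[symmetric] power2_eq_square divide_simps mult.commute)
  finally have "cmod (cinner x y) = Re (cinner (w *\<^sub>C x) y)" by simp
  also have "\<dots> \<le> norm (w *\<^sub>C x) * norm y" by (rule Re_CS')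
  finally show ?thesis by (simp add: norm_scaleC wm)
qed

lemma logconvex_mult:
  fixes m :: "nat \<Rightarrow> real"
  assumes pos: "\<And>k. m k > 0" and A0: "cond_A0 m" and A1: "cond_A1 m"
  shows "m a * m b \<le> m (a + b)"
proof -
  define r where "r k = m (Suc k) / m k" for k
  have step: "r k \<le> r (Suc k)" for k
  proof -
    have "(m (Suc k))^2 \<le> m k * m (Suc (Suc k))"
      using A1 unfolding cond_A1_def by (metis Suc_eq_plus1 diff_Suc_1 le_add2)
    thus ?thesis using pos[of k] pos[of "Suc k"]
      by (simp add: r_def divide_simps power2_eq_square mult.commute)
  qed
  have mono: "r k \<le> r k'" if "k \<le> k'" for k k'
    using that by (induction k' rule: dec_induct) (auto intro: order_trans step)
  have rpos: "r k \<ge> 0" for k using pos[of k] pos[of "Suc k"] by (simp add: r_def)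
  have mS: "m (Suc k) = m k * r k" for k using pos[of k] by (simp add: r_def)
  show ?thesis
  proof (induction b)
    case 0 thus ?case using A0 by (simp add: cond_A0_def)
  next
    case (Suc b)
    have "m a * m (Suc b) = (m a * m b) * r b" by (simp add: mS mult.assoc)
    also have "\<dots> \<le> m (a + b) * r (a + b)"
      by (rule mult_mono[OF Suc.IH mono]) (use rpos pos in \<open>auto simp: less_imp_le\<close>)
    also have "\<dots> = m (a + Suc b)" by (simp add: mS)
    finally show ?case .
  qed
qed

lemma A2_double:
  assumes "cond_A2 H m" shows "m (2*a) \<le> H^(2*a) * (m a)^2"
  using assms unfolding cond_A2_def by (metis mult_2 mult.assoc power2_eq_square)

lemma H_ge_1:
  fixes m :: "nat \<Rightarrow> real"
  assumes "cond_A2 H m" "cond_A0 m" shows "H \<ge> 1"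
  using assms unfolding cond_A2_def cond_A0_def by (metis add_0 mult.right_neutral power_one_right)

lemma fact_le_A3:
  fixes m q :: "nat \<Rightarrow> real"
  assumes posm: "\<And>k. m k > 0" and posq: "\<And>k. q k > 0"
    and A0: "cond_A0 m" "cond_A0 q" and L: "L \<ge> 1" "\<forall>p\<ge>1. real p * m (p - 1) * q (p - 1) \<le> L * m p * q p"
  shows "fact j \<le> L^j * m j * q j"
proof (induction j)
  case 0 thus ?case using A0 by (simp add: cond_A0_def)
next
  case (Suc j)
  have "fact (Suc j) = real (Suc j) * fact j" by simp
  also have "\<dots> \<le> real (Suc j) * (L^j * m j * q j)"
    by (rule mult_left_mono[OF Suc.IH]) simp
  also have "\<dots> = L^j * (real (Suc j) * m j * q j)" by (simp add: algebra_simps)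
  also have "\<dots> \<le> L^j * (L * m (Suc j) * q (Suc j))"
    using L(2)[rule_format, of "Suc j"] L(1) by (intro mult_left_mono) auto
  also have "\<dots> = L^(Suc j) * m (Suc j) * q (Suc j)" by (simp add: algebra_simps)
  finally show ?case .
qed

definition ff :: "nat \<Rightarrow> nat \<Rightarrow> real" where
  "ff a j = real (a choose j) * fact j"

lemma ff_Suc: "ff a (Suc j) = real a * ff (a - 1) j"
proof -
  have "real (Suc j) * real (a choose Suc j) = real a * real ((a - 1) choose j)"
    using binomial_absorption[of j a] by (metis of_nat_mult)
  have "ff a (Suc j) = (real (Suc j) * real (a choose Suc j)) * fact j"
    unfolding ff_def by (simp add: algebra_simps)
  also have "\<dots> = real a * ff (a - 1) j" unfolding \<open>real (Suc j) * _ = _\<close> ff_def by (simp add: algebra_simps)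
  finally show ?thesis .
qed

lemma ff_nonneg: "ff a j \<ge> 0" by (simp add: ff_def)

lemma ff_le: "ff a j \<le> 2^a * fact j"
proof -
  have "real (a choose j) \<le> real (2^a)" using binomial_le_pow2[of a j] by (simp only: of_nat_le_iff)
  thus ?thesis unfolding ff_def by (intro mult_right_mono) simp_all
qed

lemma ff_step: "real a0 * ff (A - 1) j \<le> ff A (Suc j)" if "a0 \<le> A"
  using that by (simp add: ff_Suc ff_nonneg mult_right_mono)

lemma est:
  fixes m q :: "nat \<Rightarrow> real" and N :: "nat \<Rightarrow> nat \<Rightarrow> real" and C E K L cc :: real
  assumes posm: "\<And>k. m k > 0" and posq: "\<And>k. q k > 0"
    and A0: "cond_A0 m" "cond_A0 q" and A1: "cond_A1 m" "cond_A1 q"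
    and L: "L \<ge> 1" "\<forall>p\<ge>1. real p * m (p - 1) * q (p - 1) \<le> L * m p * q p"
    and K: "K \<ge> 1" "cc \<ge> 0" "cc * L \<le> K" and E: "E \<ge> 1" and C: "C \<ge> 0"
    and N: "\<And>a b. 0 \<le> N a b" "\<And>a b. N a b \<le> C * E^(a+b) * m a * q b"
  shows "(\<Sum>j\<le>b. real (b choose j) * ff a j * cc^j * (if j \<le> a \<and> j \<le> b then N (a-j) (b-j) else 0))
         \<le> C * (4*K*E)^(a+b) * m a * q b"
proof -
  define M where "M = (2*K*E)^(a+b) * C * m a * q b"
  have M0: "M \<ge> 0" unfolding M_def using K E C posm[of a] posq[of b] by simp
  have tm: "real (b choose j) * ff a j * cc^j * (if j \<le> a \<and> j \<le> b then N (a-j) (b-j) else 0) \<le> M" for j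
  proof (cases "j \<le> a \<and> j \<le> b")
    case False thus ?thesis using M0 by auto
  next
    case True
    hence ja: "j \<le> a" and jb: "j \<le> b" by auto
    have b1: "real (b choose j) \<le> 2^b"
    proof -
      have "real (b choose j) \<le> real (2^b)" using binomial_le_pow2[of b j] by (simp only: of_nat_le_iff)
      thus ?thesis by simp
    qed
    have f1: "fact j * cc^j \<le> K^j * m j * q j"
    proof -
      have "fact j * cc^j \<le> (L^j * m j * q j) * cc^j"
        using fact_le_A3[OF posm posq A0 L] K by (intro mult_right_mono) auto
      also have "\<dots> = (cc * L)^j * m j * q j" by (simp add: power_mult_distrib algebra_simps)
      also have "\<dots> \<le> K^j * m j * q j"
        using K L(1) posm[of j] posq[of j] by (intro mult_right_mono power_mono) (auto simp: less_imp_le)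
      finally show ?thesis .
    qed
    have n1: "N (a-j) (b-j) \<le> C * E^(a+b) * m (a-j) * q (b-j)"
    proof -
      have "N (a-j) (b-j) \<le> C * E^(a-j+(b-j)) * m (a-j) * q (b-j)" by (rule N(2))
      also have "\<dots> \<le> C * E^(a+b) * m (a-j) * q (b-j)"
        using C E posm[of "a-j"] posq[of "b-j"]
        by (intro mult_right_mono mult_left_mono power_increasing) (auto simp: less_imp_le)
      finally show ?thesis .
    qed
    have Kj: "K^j \<le> K^(a+b)" using K ja by (intro power_increasing) auto
    have mm: "m j * m (a-j) \<le> m a" using logconvex_mult[OF posm A0(1) A1(1), of j "a-j"] ja by simp
    have qq: "q j * q (b-j) \<le> q b" using logconvex_mult[OF posq A0(2) A1(2), of j "b-j"] jb by simp
    have "real (b choose j) * ff a j * cc^j * N (a-j) (b-j)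
          \<le> 2^b * (2^a * fact j) * cc^j * N (a-j) (b-j)"
      using b1 ff_le[of a j] ff_nonneg[of a j] N(1) K(2)
      by (intro mult_right_mono mult_mono) auto
    also have "\<dots> = 2^(a+b) * (fact j * cc^j) * N (a-j) (b-j)" by (simp add: power_add algebra_simps)
    also have "\<dots> \<le> 2^(a+b) * (K^j * m j * q j) * (C * E^(a+b) * m (a-j) * q (b-j))"
      by (rule mult_mono[OF mult_left_mono[OF f1] n1]) (use N(1) K posm[of j] posq[of j] in auto)
    also have "\<dots> = 2^(a+b) * K^j * C * E^(a+b) * (m j * m (a-j)) * (q j * q (b-j))"
      by (simp add: algebra_simps)
    also have "\<dots> \<le> 2^(a+b) * K^(a+b) * C * E^(a+b) * m a * q b"
      using Kj mm qq C E K posm posq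
      by (intro mult_mono mult_right_mono) (auto simp: less_imp_le mult_nonneg_nonneg)
    also have "\<dots> = M" by (simp add: M_def power_mult_distrib algebra_simps)
    finally show ?thesis using True by simp
  qed
  have "(\<Sum>j\<le>b. real (b choose j) * ff a j * cc^j * (if j \<le> a \<and> j \<le> b then N (a-j) (b-j) else 0))
        \<le> (\<Sum>j\<le>b. M)" by (rule sum_mono) (rule tm)
  also have "\<dots> = real (Suc b) * M" by simp
  also have "\<dots> \<le> 2^(a+b) * M"
  proof -
    have "Suc b \<le> 2^b" using less_exp[of b] by (simp only: Suc_le_eq)
    hence "real (Suc b) \<le> real (2^b)" by (simp only: of_nat_le_iff)
    hence "real (Suc b) \<le> 2^b" by simp
    also have "(2::real)^b \<le> 2^(a+b)" by (intro power_increasing) auto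
    finally show ?thesis using M0 by (intro mult_right_mono) auto
  qed
  also have "\<dots> = C * (4*K*E)^(a+b) * m a * q b"
  proof -
    have "(4*K*E)^(a+b) = (2*(2*K*E))^(a+b)" by (rule arg_cong[where f="\<lambda>x. x^(a+b)"]) simp
    also have "\<dots> = (2::real)^(a+b) * (2*K*E)^(a+b)" by (rule power_mult_distrib)
    finally have "(2::real)^(a+b) * (2*K*E)^(a+b) = (4*K*E)^(a+b)" by simp
    thus ?thesis unfolding M_def by (simp add: mult.assoc[symmetric])
  qed
  finally show ?thesis .
qed

lemma op_word_append: "op_word Z (\<alpha> @ \<beta>) v = op_word Z \<alpha> (op_word Z \<beta> v)"
  by (induction \<alpha>) auto

lemma op_word_rep: "op_word Z (replicate k l) v = (Z l ^^ k) v"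
  by (induction k) auto

lemma minus_scaleC: "- (r *\<^sub>C (x::'a::complex_vector)) = (- r) *\<^sub>C x"
proof -
  have "- (r *\<^sub>C x) = (-1::real) *\<^sub>R (r *\<^sub>C x)" by simp
  also have "\<dots> = (- r) *\<^sub>C x" by (simp add: scaleR_scaleC scaleC_scaleC)
  finally show ?thesis .
qed

lemma scaleC_zero_left[simp]: "(0::complex) *\<^sub>C (x::'a::complex_vector) = 0"
proof -
  have "(0::complex) *\<^sub>C x = (0 + 0) *\<^sub>C x" by simp
  also have "\<dots> = 0 *\<^sub>C x + 0 *\<^sub>C x" by (rule scaleC_add_left)
  finally show ?thesis by simp
qed

locale opset =
  fixes n :: nat and D :: "'a::chilbert_space set" and DX DY :: "nat \<Rightarrow> 'a set"
    and X Y :: "nat \<Rightarrow> 'a \<Rightarrow> 'a" and c :: "nat \<Rightarrow> complex"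
  assumes ops: "\<forall>i\<in>{1..n}. lin_op (DX i) (X i) \<and> lin_op (DY i) (Y i)"
    and herm: "\<forall>i\<in>{1..n}. (hermitian (DX i) (X i) \<or> skew_hermitian (DX i) (X i))
                          \<and> (hermitian (DY i) (Y i) \<or> skew_hermitian (DY i) (Y i))"
    and dom: "common_invariant_domain D {1..n} DX X"
             "common_invariant_domain D {1..n} DY Y"
    and comm_XX: "\<forall>i\<in>{1..n}. \<forall>j\<in>{1..n}. \<forall>v\<in>D. X i (X j v) = X j (X i v)"
    and comm_YY: "\<forall>i\<in>{1..n}. \<forall>j\<in>{1..n}. \<forall>v\<in>D. Y i (Y j v) = Y j (Y i v)"
    and comm_XY: "\<forall>i\<in>{1..n}. \<forall>j\<in>{1..n}. i \<noteq> j \<longrightarrow> (\<forall>v\<in>D. X i (Y j v) = Y j (X i v))"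
    and comm_XYi: "\<forall>i\<in>{1..n}. c i \<noteq> 0 \<and> (\<forall>v\<in>D. X i (Y i v) - Y i (X i v) = c i *\<^sub>C v)"
begin

definition "Z = join_tuple n X Y"
definition "DZ = join_tuple n DX DY"
definition "pr l = (if l \<le> n then l else l - n)"

definition linD :: "('a \<Rightarrow> 'a) \<Rightarrow> bool" where
  "linD f \<longleftrightarrow> (\<forall>v\<in>D. f v \<in> D) \<and> (\<forall>v\<in>D. \<forall>w\<in>D. f (v + w) = f v + f w)
       \<and> (\<forall>r. \<forall>v\<in>D. f (r *\<^sub>C v) = r *\<^sub>C f v)"

definition adjD :: "('a \<Rightarrow> 'a) \<Rightarrow> ('a \<Rightarrow> 'a) \<Rightarrow> bool" where
  "adjD f g \<longleftrightarrow> (\<exists>\<sigma>::complex. (\<sigma> = 1 \<or> \<sigma> = -1) \<and> (\<forall>v\<in>D. \<forall>w\<in>D. cinner (f v) w = \<sigma> * cinner v (g w)))"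

lemma D_csub: "csubspace D" using dom(1) by (simp add: common_invariant_domain_def)

lemma D_add: "v \<in> D \<Longrightarrow> w \<in> D \<Longrightarrow> v + w \<in> D" using D_csub by (simp add: csubspace_def)
lemma D_scale: "v \<in> D \<Longrightarrow> r *\<^sub>C v \<in> D" using D_csub by (simp add: csubspace_def)
lemma D_diff: "v \<in> D \<Longrightarrow> w \<in> D \<Longrightarrow> v - r *\<^sub>C w \<in> D"
proof -
  assume "v \<in> D" "w \<in> D"
  have "v - r *\<^sub>C w = v + (-r) *\<^sub>C w" by (simp only: diff_conv_add_uminus minus_scaleC)
  show ?thesis unfolding \<open>v - r *\<^sub>C w = _\<close> by (intro D_add D_scale \<open>v \<in> D\<close> \<open>w \<in> D\<close>)
qed

lemma linD_diff: "linD f \<Longrightarrow> v \<in> D \<Longrightarrow> w \<in> D \<Longrightarrow> f (v - r *\<^sub>C w) = f v - r *\<^sub>C f w"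
proof -
  assume f: "linD f" and vw: "v \<in> D" "w \<in> D"
  have e: "\<And>x y. x - r *\<^sub>C y = x + (-r) *\<^sub>C y" by (simp only: diff_conv_add_uminus minus_scaleC)
  have "f (v + (-r) *\<^sub>C w) = f v + f ((-r) *\<^sub>C w)" using f vw D_scale[of w "-r"] by (simp add: linD_def)
  also have "f ((-r) *\<^sub>C w) = (-r) *\<^sub>C f w" using f vw by (simp add: linD_def)
  finally show ?thesis by (simp only: e)
qed

lemma linD_in: "linD f \<Longrightarrow> v \<in> D \<Longrightarrow> f v \<in> D" by (simp add: linD_def)

lemma linD_comp: "linD f \<Longrightarrow> linD g \<Longrightarrow> linD (\<lambda>v. f (g v))"
  unfolding linD_def by auto

lemma linD_id: "linD (\<lambda>v. v)" unfolding linD_def by auto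

lemma linD_pow: "linD f \<Longrightarrow> linD (f ^^ k)"
proof (induction k)
  case 0 thus ?case using linD_id by (simp add: id_def)
next
  case (Suc k)
  have "linD (\<lambda>v. f ((f ^^ k) v))" by (rule linD_comp[OF Suc.prems Suc.IH[OF Suc.prems]])
  thus ?case by (simp add: comp_def)
qed

lemma lin_op_linD: "lin_op Dm f \<Longrightarrow> D \<subseteq> Dm \<Longrightarrow> f ` D \<subseteq> D \<Longrightarrow> linD f"
  unfolding lin_op_def linD_def by (meson image_subset_iff subsetD)

lemma linD_X: "i \<in> {1..n} \<Longrightarrow> linD (X i)"
  using ops dom(1) by (intro lin_op_linD[of "DX i"]) (auto simp: common_invariant_domain_def)

lemma linD_Y: "i \<in> {1..n} \<Longrightarrow> linD (Y i)"
  using ops dom(2) by (intro lin_op_linD[of "DY i"]) (auto simp: common_invariant_domain_def)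

lemma Z_X: "i \<le> n \<Longrightarrow> Z i = X i" by (simp add: Z_def join_tuple_def)
lemma Z_Y: "1 \<le> i \<Longrightarrow> Z (i + n) = Y i" by (simp add: Z_def join_tuple_def)

lemma Z_cases: assumes "l \<in> {1..2*n}"
  obtains "l \<le> n" "l \<in> {1..n}" "Z l = X l" "pr l = l"
  | "l > n" "l - n \<in> {1..n}" "Z l = Y (l - n)" "pr l = l - n"
proof (cases "l \<le> n")
  case True
  show ?thesis by (rule that(1)) (use True assms in \<open>auto simp: Z_def join_tuple_def pr_def\<close>)
next
  case False
  show ?thesis by (rule that(2)) (use False assms in \<open>auto simp: Z_def join_tuple_def pr_def\<close>)
qed

lemma linD_Z: assumes "l \<in> {1..2*n}" shows "linD (Z l)"
  using assms
proof (cases rule: Z_cases)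
  case 1 thus ?thesis using linD_X[of l] by simp
next
  case 2 thus ?thesis using linD_Y[of "l - n"] by simp
qed

lemma linD_word: "set w \<subseteq> {1..2*n} \<Longrightarrow> linD (op_word Z w)"
proof (induction w)
  case Nil thus ?case using linD_id by simp
next
  case (Cons l w)
  have "linD (\<lambda>v. Z l (op_word Z w v))" using Cons by (intro linD_comp[OF linD_Z]) auto
  thus ?case by simp
qed

lemma word_in: "set w \<subseteq> {1..2*n} \<Longrightarrow> v \<in> D \<Longrightarrow> op_word Z w v \<in> D"
  using linD_word linD_in by blast

lemma adjD_comp: assumes "adjD f g" "adjD f' g'" "linD f'" "linD g"
  shows "adjD (\<lambda>v. f (f' v)) (\<lambda>w. g' (g w))"
proof -
  obtain s where s: "s = 1 \<or> s = -1" "\<forall>v\<in>D. \<forall>w\<in>D. cinner (f v) w = s * cinner v (g w)"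
    using assms(1) adjD_def by blast
  obtain s' where s': "s' = 1 \<or> s' = -1" "\<forall>v\<in>D. \<forall>w\<in>D. cinner (f' v) w = s' * cinner v (g' w)"
    using assms(2) adjD_def by blast
  have "\<forall>v\<in>D. \<forall>w\<in>D. cinner (f (f' v)) w = (s * s') * cinner v (g' (g w))"
    using s(2) s'(2) linD_in[OF assms(3)] linD_in[OF assms(4)] by (simp add: mult.assoc)
  moreover have "s * s' = 1 \<or> s * s' = -1" using s(1) s'(1) by auto
  ultimately show ?thesis unfolding adjD_def by blast
qed

lemma adjD_id: "adjD (\<lambda>v. v) (\<lambda>v. v)" unfolding adjD_def by (rule exI[of _ 1]) simp

lemma adjD_X: "i \<in> {1..n} \<Longrightarrow> adjD (X i) (X i)"
proof -
  assume i: "i \<in> {1..n}"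
  have sub: "D \<subseteq> DX i" using dom(1) i by (auto simp: common_invariant_domain_def)
  from herm i have "hermitian (DX i) (X i) \<or> skew_hermitian (DX i) (X i)" by auto
  thus ?thesis
  proof
    assume "hermitian (DX i) (X i)"
    thus ?thesis unfolding adjD_def hermitian_def using sub by (intro exI[of _ 1]) auto
  next
    assume "skew_hermitian (DX i) (X i)"
    thus ?thesis unfolding adjD_def skew_hermitian_def using sub by (intro exI[of _ "-1"]) auto
  qed
qed

lemma adjD_Y: "i \<in> {1..n} \<Longrightarrow> adjD (Y i) (Y i)"
proof -
  assume i: "i \<in> {1..n}"
  have sub: "D \<subseteq> DY i" using dom(2) i by (auto simp: common_invariant_domain_def)
  from herm i have "hermitian (DY i) (Y i) \<or> skew_hermitian (DY i) (Y i)" by auto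
  thus ?thesis
  proof
    assume "hermitian (DY i) (Y i)"
    thus ?thesis unfolding adjD_def hermitian_def using sub by (intro exI[of _ 1]) auto
  next
    assume "skew_hermitian (DY i) (Y i)"
    thus ?thesis unfolding adjD_def skew_hermitian_def using sub by (intro exI[of _ "-1"]) auto
  qed
qed

lemma adjD_Z: assumes "l \<in> {1..2*n}" shows "adjD (Z l) (Z l)"
  using assms
proof (cases rule: Z_cases)
  case 1 thus ?thesis using adjD_X[of l] by simp
next
  case 2 thus ?thesis using adjD_Y[of "l - n"] by simp
qed

lemma adjD_word: "set w \<subseteq> {1..2*n} \<Longrightarrow> adjD (op_word Z w) (op_word Z (rev w))"
proof (induction w)
  case Nil thus ?case using adjD_id by simp
next
  case (Cons l w)
  have "adjD (\<lambda>v. Z l (op_word Z w v)) (\<lambda>v. op_word Z (rev w) (Z l v))"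
    using Cons by (intro adjD_comp[OF adjD_Z Cons.IH linD_word linD_Z]) auto
  thus ?case by (simp add: op_word_append)
qed

lemma comm_letters: assumes "l \<in> {1..2*n}" "l' \<in> {1..2*n}" "pr l \<noteq> pr l'" "v \<in> D"
  shows "Z l (Z l' v) = Z l' (Z l v)"
  using assms(1)
proof (cases rule: Z_cases)
  case 1
  from assms(2) show ?thesis
  proof (cases rule: Z_cases)
    case 1 thus ?thesis using \<open>l \<in> {1..n}\<close> \<open>Z l = X l\<close> comm_XX assms(4) by auto
  next
    case 2 thus ?thesis using \<open>l \<in> {1..n}\<close> \<open>Z l = X l\<close> \<open>pr l = l\<close> comm_XY assms(3,4) by auto
  qed
next
  case 2
  from assms(2) show ?thesis
  proof (cases rule: Z_cases)
    case 1 thus ?thesis using \<open>l - n \<in> {1..n}\<close> \<open>Z l = Y (l - n)\<close> \<open>pr l = l - n\<close> comm_XY assms(3,4) by auto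
  next
    case 2 thus ?thesis using \<open>l - n \<in> {1..n}\<close> \<open>Z l = Y (l - n)\<close> comm_YY assms(4) by auto
  qed
qed

lemma comm_letter_word: assumes "l \<in> {1..2*n}" "set w \<subseteq> {1..2*n}" "\<forall>l'\<in>set w. pr l' \<noteq> pr l" "v \<in> D"
  shows "Z l (op_word Z w v) = op_word Z w (Z l v)"
  using assms(2,3)
proof (induction w)
  case Nil thus ?case by simp
next
  case (Cons l' w)
  have "Z l (op_word Z (l' # w) v) = Z l (Z l' (op_word Z w v))" by simp
  also have "\<dots> = Z l' (Z l (op_word Z w v))"
    using Cons.prems assms(1,4) by (intro comm_letters word_in) auto
  also have "\<dots> = Z l' (op_word Z w (Z l v))" using Cons by simp
  finally show ?case by simp
qed

lemma comm_words: assumes "set w1 \<subseteq> {1..2*n}" "set w2 \<subseteq> {1..2*n}"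
    "\<forall>l\<in>set w1. \<forall>l'\<in>set w2. pr l \<noteq> pr l'" "v \<in> D"
  shows "op_word Z w1 (op_word Z w2 v) = op_word Z w2 (op_word Z w1 v)"
  using assms(1,3,4)
proof (induction w1 arbitrary: v)
  case Nil thus ?case by simp
next
  case (Cons l w1)
  have "op_word Z (l # w1) (op_word Z w2 v) = Z l (op_word Z w1 (op_word Z w2 v))" by simp
  also have "\<dots> = Z l (op_word Z w2 (op_word Z w1 v))" using Cons by simp
  also have "\<dots> = op_word Z w2 (Z l (op_word Z w1 v))"
    using Cons.prems assms(2) by (intro comm_letter_word word_in) auto
  finally show ?case by simp
qed

lemma split_word: assumes "set w \<subseteq> {1..2*n}" "v \<in> D"
  shows "op_word Z w v = op_word Z (filter (\<lambda>l. pr l = i) w) (op_word Z (filter (\<lambda>l. pr l \<noteq> i) w) v)"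
  using assms(1)
proof (induction w)
  case Nil thus ?case by simp
next
  case (Cons l w)
  show ?case
  proof (cases "pr l = i")
    case True thus ?thesis using Cons by simp
  next
    case False
    have "op_word Z (l # w) v = Z l (op_word Z (filter (\<lambda>l. pr l = i) w) (op_word Z (filter (\<lambda>l. pr l \<noteq> i) w) v))"
      using Cons by simp
    also have "\<dots> = op_word Z (filter (\<lambda>l. pr l = i) w) (Z l (op_word Z (filter (\<lambda>l. pr l \<noteq> i) w) v))"
      using Cons.prems False assms(2) by (intro comm_letter_word word_in) auto
    finally show ?thesis using False by simp
  qed
qed

lemma ccr_pow: assumes i: "i \<in> {1..n}" and v: "v \<in> D"
  shows "Y i ((X i ^^ a) v) = (X i ^^ a) (Y i v) - (of_nat a * c i) *\<^sub>C (X i ^^ (a - 1)) v"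
  using v
proof (induction a arbitrary: v)
  case 0 thus ?case by simp
next
  case (Suc a)
  have lx: "linD (X i)" "linD (Y i)" "linD (X i ^^ a)" using i linD_X linD_Y linD_pow by auto
  have xv: "X i v \<in> D" "Y i v \<in> D" using Suc.prems lx linD_in by auto
  have "Y i ((X i ^^ Suc a) v) = Y i ((X i ^^ a) (X i v))" by (simp add: funpow_swap1)
  also have "\<dots> = (X i ^^ a) (Y i (X i v)) - (of_nat a * c i) *\<^sub>C (X i ^^ (a - 1)) (X i v)"
    using Suc.IH xv by simp
  also have "Y i (X i v) = X i (Y i v) - c i *\<^sub>C v"
  proof -
    have h: "X i (Y i v) - Y i (X i v) = c i *\<^sub>C v" using comm_XYi i Suc.prems by auto
    show ?thesis by (simp add: h[symmetric])
  qed
  also have "(X i ^^ a) (X i (Y i v) - c i *\<^sub>C v) = (X i ^^ Suc a) (Y i v) - c i *\<^sub>C (X i ^^ a) v"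
    using linD_diff[OF lx(3)] lx xv Suc.prems linD_in by (simp add: funpow_swap1)
  also have "(of_nat a * c i) *\<^sub>C (X i ^^ (a - 1)) (X i v) = (of_nat a * c i) *\<^sub>C (X i ^^ a) v"
    by (cases a) (simp_all add: funpow_swap1)
  finally have "Y i ((X i ^^ Suc a) v) = (X i ^^ Suc a) (Y i v) - (c i *\<^sub>C (X i ^^ a) v + (of_nat a * c i) *\<^sub>C (X i ^^ a) v)"
    by (simp add: algebra_simps)
  also have "c i *\<^sub>C (X i ^^ a) v + (of_nat a * c i) *\<^sub>C (X i ^^ a) v = (of_nat (Suc a) * c i) *\<^sub>C (X i ^^ (Suc a - 1)) v"
    by (simp add: scaleC_add_left[symmetric] algebra_simps)
  finally show ?case .
qed

end

definition Nj :: "(nat \<Rightarrow> nat \<Rightarrow> real) \<Rightarrow> nat \<Rightarrow> nat \<Rightarrow> nat \<Rightarrow> real" where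
  "Nj N A B j = (if j \<le> A \<and> j \<le> B then N (A - j) (B - j) else 0)"

lemma Nj_Suc: "A \<ge> 1 \<Longrightarrow> B \<ge> 1 \<Longrightarrow> Nj N (A - 1) (B - 1) j = Nj N A B (Suc j)"
  unfolding Nj_def by auto

lemma Nj_nonneg: "(\<And>a b. N a b \<ge> 0) \<Longrightarrow> Nj N A B j \<ge> 0"
  unfolding Nj_def by auto

lemma pascal_sum:
  fixes T :: "nat \<Rightarrow> real"
  shows "(\<Sum>j\<le>Suc b. real (Suc b choose j) * T j) = (\<Sum>j\<le>b. real (b choose j) * T j) + (\<Sum>j\<le>b. real (b choose j) * T (Suc j))"
proof -
  have e1: "(\<Sum>j\<le>Suc b. real (Suc b choose j) * T j) = T 0 + (\<Sum>j\<le>b. real (Suc b choose Suc j) * T (Suc j))"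
    by (subst sum.atMost_Suc_shift) simp
  have e2: "(\<Sum>j\<le>b. real (Suc b choose Suc j) * T (Suc j)) = (\<Sum>j\<le>b. real (b choose Suc j) * T (Suc j)) + (\<Sum>j\<le>b. real (b choose j) * T (Suc j))"
    by (simp add: sum.distrib[symmetric] algebra_simps)
  have e3: "(\<Sum>j\<le>Suc b. real (b choose j) * T j) = (\<Sum>j\<le>b. real (b choose j) * T j)"
    by simp
  have e4: "(\<Sum>j\<le>Suc b. real (b choose j) * T j) = T 0 + (\<Sum>j\<le>b. real (b choose Suc j) * T (Suc j))"
    by (subst sum.atMost_Suc_shift) simp
  have e5: "(\<Sum>j\<le>b. real (b choose j) * T j) = T 0 + (\<Sum>j\<le>b. real (b choose Suc j) * T (Suc j))"
    using e4 by (simp add: binomial_eq_0)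
  show ?thesis using e1 e2 e5 by linarith
qed

lemma count_idx_append: "count_idx (xs @ [x]) k = count_idx xs k + (if k = x then 1 else 0)"
  by (simp add: count_idx_def)

lemma count_idx_Nil[simp]: "count_idx [] k = 0" by (simp add: count_idx_def)

context opset begin

lemma pair_rec:
  fixes \<phi> :: "'a \<Rightarrow> real" and N :: "nat \<Rightarrow> nat \<Rightarrow> real"
  assumes i: "i \<in> {1..n}" and u: "u \<in> D"
    and \<phi>: "\<And>v w r. v \<in> D \<Longrightarrow> w \<in> D \<Longrightarrow> \<phi> (v - r *\<^sub>C w) \<le> \<phi> v + cmod r * \<phi> w"
    and N: "\<And>a b. \<phi> ((X i ^^ a) ((Y i ^^ b) u)) \<le> N a b" "\<And>a b. N a b \<ge> 0"
    and w: "set w \<subseteq> {i, i+n}"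
  shows "\<phi> (op_word Z w ((X i ^^ a0) ((Y i ^^ b0) u))) \<le>
    (\<Sum>j\<le>count_idx w (i+n). real (count_idx w (i+n) choose j) * (ff (count_idx w i + a0) j * cmod (c i)^j
        * Nj N (count_idx w i + a0) (count_idx w (i+n) + b0) j))"
  using w
proof (induction w arbitrary: a0 b0 rule: rev_induct)
  case Nil
  show ?case using N(1)[of a0 b0] by (simp add: ff_def Nj_def)
next
  case (snoc l w)
  have lin: "linD (X i)" "linD (Y i)" "linD (X i ^^ a0)" "linD (Y i ^^ b0)" "linD (Y i ^^ Suc b0)"
    using linD_pow linD_X[OF i] linD_Y[OF i] by blast+
  have wsub: "set w \<subseteq> {1..2*n}" using snoc.prems i by auto
  have ineq: "i \<noteq> i + n" using i by auto
  have l: "l = i \<or> l = i + n" using snoc.prems by auto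
  have vD: "(Y i ^^ b0) u \<in> D" "(Y i ^^ Suc b0) u \<in> D" using lin u linD_in by auto
  define a' where "a' = count_idx w i"
  define b' where "b' = count_idx w (i+n)"
  from l show ?case
  proof
    assume li: "l = i"
    have cnt: "count_idx (w @ [l]) i = Suc a'" "count_idx (w @ [l]) (i+n) = b'"
      using li ineq by (simp_all add: count_idx_append a'_def b'_def)
    have "op_word Z (w @ [l]) ((X i ^^ a0) ((Y i ^^ b0) u)) = op_word Z w ((X i ^^ Suc a0) ((Y i ^^ b0) u))"
      using li i by (simp add: op_word_append Z_X)
    moreover have "\<phi> (op_word Z w ((X i ^^ Suc a0) ((Y i ^^ b0) u))) \<le>
      (\<Sum>j\<le>b'. real (b' choose j) * (ff (a' + Suc a0) j * cmod (c i)^j * Nj N (a' + Suc a0) (b' + b0) j))"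
      using snoc.IH[of "Suc a0" b0] snoc.prems unfolding a'_def b'_def by simp
    ultimately show ?thesis unfolding cnt by simp
  next
    assume li: "l = i + n"
    have cnt: "count_idx (w @ [l]) i = a'" "count_idx (w @ [l]) (i+n) = Suc b'"
      using li ineq by (simp_all add: count_idx_append a'_def b'_def)
    define v1 where "v1 = (X i ^^ a0) ((Y i ^^ Suc b0) u)"
    define v2 where "v2 = (X i ^^ (a0 - 1)) ((Y i ^^ b0) u)"
    have v12: "v1 \<in> D" "v2 \<in> D" unfolding v1_def v2_def using vD lin linD_in linD_pow by auto
    have "op_word Z (w @ [l]) ((X i ^^ a0) ((Y i ^^ b0) u)) = op_word Z w (Y i ((X i ^^ a0) ((Y i ^^ b0) u)))"
      using li i by (simp add: op_word_append Z_Y)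
    also have "Y i ((X i ^^ a0) ((Y i ^^ b0) u)) = v1 - (of_nat a0 * c i) *\<^sub>C v2"
      unfolding v1_def v2_def using ccr_pow[OF i vD(1)] by simp
    also have "op_word Z w (v1 - (of_nat a0 * c i) *\<^sub>C v2) = op_word Z w v1 - (of_nat a0 * c i) *\<^sub>C op_word Z w v2"
      by (rule linD_diff[OF linD_word[OF wsub] v12])
    finally have eq: "op_word Z (w @ [l]) ((X i ^^ a0) ((Y i ^^ b0) u)) = op_word Z w v1 - (of_nat a0 * c i) *\<^sub>C op_word Z w v2" .
    define A where "A = a' + a0"
    define B where "B = Suc b' + b0"
    define T where "T j = ff A j * cmod (c i)^j * Nj N A B j" for j
    have T0: "T j \<ge> 0" for j unfolding T_def using ff_nonneg Nj_nonneg[OF N(2)] by simp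
    have IH1: "\<phi> (op_word Z w v1) \<le> (\<Sum>j\<le>b'. real (b' choose j) * T j)"
    proof -
      have "\<phi> (op_word Z w v1) \<le> (\<Sum>j\<le>b'. real (b' choose j) * (ff (a' + a0) j * cmod (c i)^j * Nj N (a' + a0) (b' + Suc b0) j))"
        using snoc.IH[of a0 "Suc b0"] snoc.prems unfolding a'_def b'_def v1_def by auto
      thus ?thesis by (simp add: T_def A_def B_def)
    qed
    have IH2: "cmod (of_nat a0 * c i) * \<phi> (op_word Z w v2) \<le> (\<Sum>j\<le>b'. real (b' choose j) * T (Suc j))"
    proof (cases "a0 = 0")
      case True thus ?thesis using T0 by (simp add: sum_nonneg)
    next
      case False
      have "\<phi> (op_word Z w v2) \<le> (\<Sum>j\<le>b'. real (b' choose j) * (ff (a' + (a0 - 1)) j * cmod (c i)^j * Nj N (a' + (a0 - 1)) (b' + b0) j))"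
        using snoc.IH[of "a0 - 1" b0] snoc.prems unfolding a'_def b'_def v2_def by auto
      hence "cmod (of_nat a0 * c i) * \<phi> (op_word Z w v2) \<le> real a0 * cmod (c i) * (\<Sum>j\<le>b'. real (b' choose j) * (ff (a' + (a0 - 1)) j * cmod (c i)^j * Nj N (a' + (a0 - 1)) (b' + b0) j))"
      proof -
        have "cmod (complex_of_nat a0 * c i) = real a0 * cmod (c i)" by (simp add: norm_mult)
        thus ?thesis using \<open>\<phi> (op_word Z w v2) \<le> _\<close> by (simp add: mult_left_mono)
      qed
      also have "\<dots> = (\<Sum>j\<le>b'. real (b' choose j) * ((real a0 * ff (A - 1) j) * cmod (c i)^(Suc j) * Nj N (A - 1) (B - 1) j))"
        using False by (simp add: sum_distrib_left A_def B_def algebra_simps)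
      also have "\<dots> \<le> (\<Sum>j\<le>b'. real (b' choose j) * T (Suc j))"
      proof (rule sum_mono)
        fix j
        have eqN: "Nj N (A - 1) (B - 1) j = Nj N A B (Suc j)" using False by (intro Nj_Suc) (auto simp: A_def B_def)
        have "(real a0 * ff (A - 1) j) * cmod (c i)^(Suc j) * Nj N A B (Suc j)
              \<le> ff A (Suc j) * cmod (c i)^(Suc j) * Nj N A B (Suc j)"
          using ff_step[of a0 A j] Nj_nonneg[OF N(2)] by (intro mult_right_mono) (auto simp: A_def)
        thus "real (b' choose j) * ((real a0 * ff (A - 1) j) * cmod (c i)^(Suc j) * Nj N (A - 1) (B - 1) j)
              \<le> real (b' choose j) * T (Suc j)"
          unfolding T_def eqN by (intro mult_left_mono) auto
      qed
      finally show ?thesis .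
    qed
    have "\<phi> (op_word Z (w @ [l]) ((X i ^^ a0) ((Y i ^^ b0) u)))
          \<le> \<phi> (op_word Z w v1) + cmod (of_nat a0 * c i) * \<phi> (op_word Z w v2)"
      unfolding eq by (intro \<phi> word_in wsub v12)
    also have "\<dots> \<le> (\<Sum>j\<le>b'. real (b' choose j) * T j) + (\<Sum>j\<le>b'. real (b' choose j) * T (Suc j))"
      using IH1 IH2 by simp
    also have "\<dots> = (\<Sum>j\<le>Suc b'. real (Suc b' choose j) * T j)" by (rule pascal_sum[symmetric])
    finally show ?thesis unfolding cnt T_def A_def B_def by simp
  qed
qed

end

lemma count_idx_replicate: "count_idx (replicate k l) j = (if j = l then k else 0)"
  by (induction k) (auto simp: count_idx_def)

lemma count_idx_app: "count_idx (xs @ ys) j = count_idx xs j + count_idx ys j"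
  by (simp add: count_idx_def)

lemma length_two: "set w \<subseteq> {x, y} \<Longrightarrow> x \<noteq> y \<Longrightarrow> length w = count_idx w x + count_idx w y"
  by (induction w) (auto simp: count_idx_def)

lemma sq_le_imp: "(x::real)^2 \<le> y^2 \<Longrightarrow> y \<ge> 0 \<Longrightarrow> x \<le> y"
proof -
  assume "x^2 \<le> y^2" "y \<ge> 0"
  hence "\<bar>x\<bar>^2 \<le> y^2" by simp
  hence "\<bar>x\<bar> \<le> y" using \<open>y \<ge> 0\<close> by (rule power2_le_imp_le)
  thus ?thesis by simp
qed

lemma ge1_mult: "(x::real) \<ge> 1 \<Longrightarrow> y \<ge> 1 \<Longrightarrow> x * y \<ge> 1"
proof -
  assume "x \<ge> 1" "y \<ge> 1"
  hence "1 * 1 \<le> x * y" by (intro mult_mono) auto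
  thus ?thesis by simp
qed

lemma est':
  fixes m q :: "nat \<Rightarrow> real" and N :: "nat \<Rightarrow> nat \<Rightarrow> real" and C E K L cc :: real
  assumes posm: "\<And>k. m k > 0" and posq: "\<And>k. q k > 0"
    and A0: "cond_A0 m" "cond_A0 q" and A1: "cond_A1 m" "cond_A1 q"
    and L: "L \<ge> 1" "\<forall>p\<ge>1. real p * m (p - 1) * q (p - 1) \<le> L * m p * q p"
    and K: "K \<ge> 1" "cc \<ge> 0" "cc * L \<le> K" and E: "E \<ge> 1" and C: "C \<ge> 0"
    and N: "\<And>a b. 0 \<le> N a b" "\<And>a b. N a b \<le> C * E^(a+b) * m a * q b"
  shows "(\<Sum>j\<le>b. real (b choose j) * (ff a j * cc^j * Nj N a b j)) \<le> C * (4*K*E)^(a+b) * m a * q b"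
  using est[OF assms] by (simp add: Nj_def mult.assoc)

context opset begin

lemma adjD_Xpow: "i \<in> {1..n} \<Longrightarrow> adjD (X i ^^ a) (X i ^^ a)"
proof -
  assume i: "i \<in> {1..n}"
  have "adjD (op_word Z (replicate a i)) (op_word Z (rev (replicate a i)))"
    using i by (intro adjD_word) auto
  moreover have "op_word Z (replicate a i) = X i ^^ a" using i by (simp add: fun_eq_iff op_word_rep Z_X)
  ultimately show ?thesis by simp
qed

lemma adjD_Ypow: "i \<in> {1..n} \<Longrightarrow> adjD (Y i ^^ a) (Y i ^^ a)"
proof -
  assume i: "i \<in> {1..n}"
  have "adjD (op_word Z (replicate a (i+n))) (op_word Z (rev (replicate a (i+n))))"
    using i by (intro adjD_word) auto
  moreover have "op_word Z (replicate a (i+n)) = Y i ^^ a" using i by (simp add: fun_eq_iff op_word_rep Z_Y)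
  ultimately show ?thesis by simp
qed

lemma adjD_E: "adjD f g \<Longrightarrow> v \<in> D \<Longrightarrow> w \<in> D \<Longrightarrow> cmod (cinner (f v) w) = cmod (cinner v (g w))"
  unfolding adjD_def by (auto simp: norm_mult)

lemma phi_norm: "v \<in> D \<Longrightarrow> w \<in> D \<Longrightarrow> norm (v - r *\<^sub>C w) \<le> norm v + cmod r * norm w"
  using norm_triangle_ineq4[of v "r *\<^sub>C w"] by (simp add: norm_scaleC)

lemma phi_inner: "v \<in> D \<Longrightarrow> w \<in> D \<Longrightarrow> cmod (cinner (v - r *\<^sub>C w) u) \<le> cmod (cinner v u) + cmod r * cmod (cinner w u)"
proof -
  have "cinner (v - r *\<^sub>C w) u = cinner v u - cnj r * cinner w u"
    by (simp add: cinner_diff_left cinner_scaleC_left)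
  hence "cmod (cinner (v - r *\<^sub>C w) u) \<le> cmod (cinner v u) + cmod (cnj r * cinner w u)"
    by (simp add: norm_triangle_ineq4)
  thus ?thesis by (simp add: norm_mult)
qed

lemma pair_bound:
  fixes mm qq :: "nat \<Rightarrow> real" and H C A :: real
  assumes i: "i \<in> {1..n}" and u: "u \<in> D"
    and posm: "\<And>k. mm k > 0" and posq: "\<And>k. qq k > 0"
    and A0: "cond_A0 mm" "cond_A0 qq" and A1: "cond_A1 mm" "cond_A1 qq"
    and A2: "cond_A2 H mm" "cond_A2 H qq" and A3: "cond_A3 mm qq"
    and C: "C > 0" and A: "A \<ge> 1"
    and bx: "\<And>k. norm ((X i ^^ k) u) \<le> C * A^k * mm k"
    and by': "\<And>k. norm ((Y i ^^ k) u) \<le> C * A^k * qq k"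
  shows "\<exists>B\<ge>1. \<forall>w. set w \<subseteq> {i, i+n} \<longrightarrow>
     norm (op_word Z w u) \<le> C * B^(length w) * mm (count_idx w i) * qq (count_idx w (i+n))"
proof -
  obtain L where L: "L \<ge> 1" "\<forall>p\<ge>1. real p * mm (p - 1) * qq (p - 1) \<le> L * mm p * qq p"
    using A3 unfolding cond_A3_def by blast
  define cc where "cc = cmod (c i)"
  define K where "K = max 1 (cc * L)"
  have K: "K \<ge> 1" "cc \<ge> 0" "cc * L \<le> K" unfolding K_def cc_def by auto
  have H1: "H \<ge> 1" using H_ge_1[OF A2(1) A0(1)] .
  have ineq: "i \<noteq> i + n" using i by auto
  have lin: "\<And>k. linD (X i ^^ k)" "\<And>k. linD (Y i ^^ k)" using linD_pow linD_X[OF i] linD_Y[OF i] by blast+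
  have inD: "\<And>k v. v \<in> D \<Longrightarrow> (X i ^^ k) v \<in> D" "\<And>k v. v \<in> D \<Longrightarrow> (Y i ^^ k) v \<in> D"
    using lin linD_in by blast+
  define N0 where "N0 a b = norm ((X i ^^ a) u) * norm ((Y i ^^ b) u)" for a b
  have N0pos: "N0 a b \<ge> 0" for a b unfolding N0_def by simp
  have N0b: "cmod (cinner ((X i ^^ a) ((Y i ^^ b) u)) u) \<le> N0 a b" for a b
  proof -
    have "cmod (cinner ((X i ^^ a) ((Y i ^^ b) u)) u) = cmod (cinner ((Y i ^^ b) u) ((X i ^^ a) u))"
      by (rule adjD_E[OF adjD_Xpow[OF i] inD(2)[OF u] u])
    also have "\<dots> \<le> norm ((Y i ^^ b) u) * norm ((X i ^^ a) u)" by (rule CS)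
    finally show ?thesis by (simp add: N0_def mult.commute)
  qed
  have N0le: "N0 a b \<le> C^2 * A^(a+b) * mm a * qq b" for a b
  proof -
    have "N0 a b \<le> (C * A^a * mm a) * (C * A^b * qq b)"
      unfolding N0_def using C A posm[of a] by (intro mult_mono bx by') auto
    thus ?thesis by (simp add: power_add power2_eq_square algebra_simps)
  qed
  define E1 where "E1 = 4 * K * A * H"
  have E1: "E1 \<ge> 1" unfolding E1_def using K A H1 by (intro ge1_mult) auto
  have N1: "norm ((X i ^^ a) ((Y i ^^ b) u)) \<le> C * E1^(a+b) * mm a * qq b" for a b
  proof -
    define x where "x = (X i ^^ a) ((Y i ^^ b) u)"
    have xD: "x \<in> D" unfolding x_def using inD u by blast
    define w where "w = replicate b (i+n) @ replicate (2*a) i @ replicate b (i+n)"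
    have ws: "set w \<subseteq> {i, i+n}" unfolding w_def by auto
    have opw: "op_word Z w u = (Y i ^^ b) ((X i ^^ (2*a)) ((Y i ^^ b) u))"
      unfolding w_def using i by (simp add: op_word_append op_word_rep Z_X Z_Y)
    have cw: "count_idx w i = 2*a" "count_idx w (i+n) = 2*b"
      unfolding w_def using ineq by (simp_all add: count_idx_app count_idx_replicate)
    have "(norm x)^2 = cmod (cinner x x)" by (simp add: cinner_self_eq norm_power)
    also have "\<dots> = cmod (cinner ((Y i ^^ b) u) ((X i ^^ a) x))"
      unfolding x_def by (rule adjD_E[OF adjD_Xpow[OF i] inD(2)[OF u]]) (use xD x_def in simp)
    also have "(X i ^^ a) x = (X i ^^ (2*a)) ((Y i ^^ b) u)"
      by (simp add: x_def funpow_add mult_2)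
    also have "cmod (cinner ((Y i ^^ b) u) ((X i ^^ (2*a)) ((Y i ^^ b) u)))
        = cmod (cinner ((X i ^^ (2*a)) ((Y i ^^ b) u)) ((Y i ^^ b) u))"
      by (subst cinner_commute) (simp only: complex_mod_cnj)
    also have "\<dots> = cmod (cinner ((Y i ^^ b) ((X i ^^ (2*a)) ((Y i ^^ b) u))) u)"
      by (rule adjD_E[OF adjD_Ypow[OF i] inD(1)[OF inD(2)[OF u]] u, symmetric])
    also have "\<dots> = cmod (cinner (op_word Z w ((X i ^^ 0) ((Y i ^^ 0) u))) u)" by (simp add: opw)
    also have "\<dots> \<le> (\<Sum>j\<le>2*b. real (2*b choose j) * (ff (2*a) j * cc^j * Nj N0 (2*a) (2*b) j))"
      using pair_rec[OF i u phi_inner N0b N0pos ws, of 0 0] by (simp add: cw cc_def)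
    also have "\<dots> \<le> C^2 * (4*K*A)^(2*a+2*b) * mm (2*a) * qq (2*b)"
      by (rule est'[OF posm posq A0 A1 L K A _ N0pos N0le]) simp
    also have "\<dots> \<le> C^2 * (4*K*A)^(2*a+2*b) * (H^(2*a) * (mm a)^2) * (H^(2*b) * (qq b)^2)"
      using A2_double[OF A2(1), of a] A2_double[OF A2(2), of b] posm[of "2*a"] posq[of "2*b"] K A
      by (intro mult_mono mult_left_mono) (auto simp: less_imp_le)
    also have "\<dots> = (C * E1^(a+b) * mm a * qq b)^2"
    proof -
      have e1: "E1^(2*a+2*b) = (4*K*A)^(2*a+2*b) * (H^(2*a) * H^(2*b))"
        unfolding E1_def by (simp only: power_mult_distrib power_add mult_ac)
      have e2: "(E1^(a+b))^2 = E1^(2*a+2*b)"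
        by (simp only: power_mult[symmetric]) (simp add: algebra_simps)
      have "(C * E1^(a+b) * mm a * qq b)^2 = C^2 * (E1^(a+b))^2 * (mm a)^2 * (qq b)^2"
        by (simp only: power_mult_distrib)
      also have "\<dots> = C^2 * ((4*K*A)^(2*a+2*b) * (H^(2*a) * H^(2*b))) * (mm a)^2 * (qq b)^2"
        by (simp only: e2 e1)
      finally show ?thesis by (simp only: ac_simps)
    qed
    finally have "(norm x)^2 \<le> (C * E1^(a+b) * mm a * qq b)^2" .
    moreover have "C * E1^(a+b) * mm a * qq b \<ge> 0" using C E1 posm[of a] posq[of b] by simp
    ultimately show ?thesis unfolding x_def by (rule sq_le_imp)
  qed
  have N1pos: "C * E1^(a+b) * mm a * qq b \<ge> 0" for a b using C E1 posm[of a] posq[of b] by simp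
  show ?thesis
  proof (intro exI[of _ "4*K*E1"] conjI allI impI)
    show "4*K*E1 \<ge> 1" using K E1 by (intro ge1_mult) auto
    fix w assume ws: "set w \<subseteq> {i, i+n}"
    have "norm (op_word Z w ((X i ^^ 0) ((Y i ^^ 0) u)))
        \<le> (\<Sum>j\<le>count_idx w (i+n). real (count_idx w (i+n) choose j) * (ff (count_idx w i) j * cc^j
              * Nj (\<lambda>a b. C * E1^(a+b) * mm a * qq b) (count_idx w i) (count_idx w (i+n)) j))"
      using pair_rec[OF i u phi_norm N1 N1pos ws, of 0 0] by (simp add: cc_def)
    also have "\<dots> \<le> C * (4*K*E1)^(count_idx w i + count_idx w (i+n)) * mm (count_idx w i) * qq (count_idx w (i+n))"
      by (rule est'[OF posm posq A0 A1 L K E1 _ N1pos]) (use C in simp_all)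
    finally show "norm (op_word Z w u) \<le> C * (4*K*E1)^(length w) * mm (count_idx w i) * qq (count_idx w (i+n))"
      using length_two[OF ws ineq] by simp
  qed
qed

end

lemma count_idx_Cons: "count_idx (x # v) l = (if l = x then 1 else 0) + count_idx v l"
  by (simp add: count_idx_def)

lemma count_idx_filter: "count_idx (filter P w) l = (if P l then count_idx w l else 0)"
  by (induction w) (auto simp: count_idx_def)

lemma count_idx_rev: "count_idx (rev w) l = count_idx w l"
  by (simp add: count_idx_def rev_filter[symmetric])

lemma sum_count_length: "finite S \<Longrightarrow> set v \<subseteq> S \<Longrightarrow> (\<Sum>l\<in>S. count_idx v l) = length v"
proof (induction v)
  case Nil thus ?case by simp
next
  case (Cons x v)
  have "(\<Sum>l\<in>S. count_idx (x # v) l) = (\<Sum>l\<in>S. (if l = x then 1 else 0)) + (\<Sum>l\<in>S. count_idx v l)"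
    by (simp add: count_idx_Cons sum.distrib)
  also have "(\<Sum>l\<in>S. (if l = x then 1 else 0)) = (1::nat)" using Cons.prems by (simp add: sum.delta)
  finally show ?case using Cons by simp
qed

lemma pword_split:
  assumes "\<forall>l\<in>{1..N}. p l 0 = 1"
  shows "p_word N p w = p_word N p (filter P w) * p_word N p (filter (\<lambda>l. \<not> P l) w)"
  unfolding p_word_def prod.distrib[symmetric]
  by (rule prod.cong) (use assms in \<open>auto simp: count_idx_filter\<close>)

lemma pword_pos: "\<forall>l\<in>{1..N}. \<forall>k. p l k > 0 \<Longrightarrow> p_word N p w > 0"
  unfolding p_word_def by (intro prod_pos) auto

lemma pword_double:
  assumes pos: "\<forall>l\<in>{1..N}. \<forall>k. p l k > 0" and A2: "\<forall>l\<in>{1..N}. cond_A2 H (p l)"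
    and v: "set v \<subseteq> {1..N}"
  shows "p_word N p (rev v @ v) \<le> H^(2 * length v) * (p_word N p v)^2"
proof -
  have "p_word N p (rev v @ v) = (\<Prod>l=1..N. p l (2 * count_idx v l))"
    unfolding p_word_def by (simp add: count_idx_app count_idx_rev mult_2)
  also have "\<dots> \<le> (\<Prod>l=1..N. H^(2 * count_idx v l) * (p l (count_idx v l))^2)"
    using A2 pos by (intro prod_mono) (auto simp: A2_double less_imp_le)
  also have "\<dots> = (\<Prod>l=1..N. H^(2 * count_idx v l)) * (\<Prod>l=1..N. (p l (count_idx v l))^2)"
    by (rule prod.distrib)
  also have "(\<Prod>l=1..N. H^(2 * count_idx v l)) = H^(\<Sum>l=1..N. 2 * count_idx v l)"
    by (simp add: power_sum)
  also have "(\<Sum>l=1..N. 2 * count_idx v l) = 2 * length v"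
    using sum_count_length[of "{1..N}" v] v by (simp add: sum_distrib_left[symmetric])
  also have "(\<Prod>l=1..N. (p l (count_idx v l))^2) = (p_word N p v)^2"
    unfolding p_word_def by (simp add: prod_power_distrib)
  finally show ?thesis .
qed

lemma pword_nil: "\<forall>l\<in>{1..N}. p l 0 = 1 \<Longrightarrow> p_word N p [] = 1"
  unfolding p_word_def by simp

context opset begin

lemma pword_pair:
  assumes i: "i \<in> {1..n}" and w: "set w \<subseteq> {i, i+n}" and p0: "\<forall>l\<in>{1..2*n}. join_tuple n m q l 0 = 1"
  shows "p_word (2*n) (join_tuple n m q) w = m i (count_idx w i) * q i (count_idx w (i+n))"
proof -
  let ?f = "\<lambda>l. join_tuple n m q l (count_idx w l)"
  have sub: "{i, i+n} \<subseteq> {1..2*n}" using i by auto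
  have "p_word (2*n) (join_tuple n m q) w = (\<Prod>l\<in>{1..2*n}. ?f l)" by (simp add: p_word_def)
  also have "\<dots> = (\<Prod>l\<in>{i, i+n}. ?f l)"
  proof (rule prod.mono_neutral_right)
    show "\<forall>l\<in>{1..2*n} - {i, i+n}. ?f l = 1"
    proof
      fix l assume l: "l \<in> {1..2*n} - {i, i+n}"
      have "count_idx w l = 0" using w l by (auto simp: count_idx_def filter_empty_conv)
      thus "?f l = 1" using p0 l by simp
    qed
  qed (use sub in auto)
  also have "\<dots> = ?f i * ?f (i+n)" using i by simp
  also have "\<dots> = m i (count_idx w i) * q i (count_idx w (i+n))" using i by (simp add: join_tuple_def)
  finally show ?thesis .
qed

lemma pr_pair: "l \<in> {1..2*n} \<Longrightarrow> pr l = i \<Longrightarrow> l \<in> {i, i+n}"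
  unfolding pr_def by (cases "l \<le> n") auto

lemma multi:
  fixes pp :: "nat \<Rightarrow> nat \<Rightarrow> real" and H :: real
  assumes u: "u \<in> D" and S: "S \<subseteq> {1..n}"
    and pp0: "\<forall>l\<in>{1..2*n}. pp l 0 = 1" and pppos: "\<forall>l\<in>{1..2*n}. \<forall>k. pp l k > 0"
    and ppA2: "\<forall>l\<in>{1..2*n}. cond_A2 H (pp l)" and H: "H \<ge> 1"
    and pb: "\<forall>i\<in>S. \<exists>C>0. \<exists>B\<ge>1. \<forall>w. set w \<subseteq> {i, i+n} \<longrightarrow>
               norm (op_word Z w u) \<le> C * B^(length w) * p_word (2*n) pp w"
  shows "\<exists>C>0. \<exists>B\<ge>1. \<forall>w. set w \<subseteq> {l\<in>{1..2*n}. pr l \<in> S} \<longrightarrow>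
               norm (op_word Z w u) \<le> C * B^(length w) * p_word (2*n) pp w"
proof -
  have "finite S" using S finite_subset by blast
  thus ?thesis using S pb
  proof (induction S rule: finite_induct)
    case empty
    have "\<forall>w. set w \<subseteq> {l\<in>{1..2*n}. pr l \<in> {}} \<longrightarrow>
               norm (op_word Z w u) \<le> (norm u + 1) * 1^(length w) * p_word (2*n) pp w"
      using pword_nil[of "2*n" pp] pp0 by auto
    moreover have "(norm u + 1) > 0" "(1::real) \<ge> 1" using norm_ge_zero[of u] by linarith+
    ultimately show ?case by blast
  next
    case (insert i S)
    have i: "i \<in> {1..n}" using insert.prems by auto
    obtain C1 B1 where C1: "C1 > 0" "B1 \<ge> 1" and b1: "\<forall>w. set w \<subseteq> {i, i+n} \<longrightarrow>
               norm (op_word Z w u) \<le> C1 * B1^(length w) * p_word (2*n) pp w"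
      using insert.prems by auto
    obtain C2 B2 where C2: "C2 > 0" "B2 \<ge> 1" and b2: "\<forall>w. set w \<subseteq> {l\<in>{1..2*n}. pr l \<in> S} \<longrightarrow>
               norm (op_word Z w u) \<le> C2 * B2^(length w) * p_word (2*n) pp w"
      using insert.IH insert.prems by auto
    define C where "C = max C1 C2"
    define B where "B = max B1 B2 * H"
    have C: "C > 0" "C1 \<le> C" "C2 \<le> C" unfolding C_def using C1 by auto
    have B: "B \<ge> 1" "B1 * H \<le> B" "B2 * H \<le> B" unfolding B_def using C1 C2 H
      by (auto intro: ge1_mult mult_right_mono)
    show ?case
    proof (rule exI[of _ C], intro conjI exI[of _ B] allI impI)
      show "C > 0" "B \<ge> 1" using C B by auto
      fix w assume w: "set w \<subseteq> {l\<in>{1..2*n}. pr l \<in> insert i S}"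
      have w2: "set w \<subseteq> {1..2*n}" using w by auto
      define P where "P = filter (\<lambda>l. pr l = i) w"
      define Q where "Q = filter (\<lambda>l. pr l \<noteq> i) w"
      have Ps: "set P \<subseteq> {i, i+n}"
      proof
        fix l assume "l \<in> set P"
        hence "l \<in> set w" "pr l = i" by (auto simp: P_def)
        thus "l \<in> {i, i+n}" using w2 pr_pair by blast
      qed
      have Qs: "set Q \<subseteq> {l\<in>{1..2*n}. pr l \<in> S}" unfolding Q_def using w by auto
      have P2: "set P \<subseteq> {1..2*n}" and Q2: "set Q \<subseteq> {1..2*n}" using w2 unfolding P_def Q_def by auto
      have RP: "set (rev P @ P) \<subseteq> {i, i+n}" "set (rev P @ P) \<subseteq> {1..2*n}" using Ps P2 by auto
      have RQ: "set (rev Q @ Q) \<subseteq> {l\<in>{1..2*n}. pr l \<in> S}" using Qs by auto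
      have len: "length P + length Q = length w" unfolding P_def Q_def by (rule sum_length_filter_compl)
      define y where "y = op_word Z Q u"
      define x where "x = op_word Z P y"
      define z where "z = op_word Z (rev P @ P) u"
      have yD: "y \<in> D" unfolding y_def using Q2 u by (rule word_in)
      have xD: "x \<in> D" unfolding x_def using P2 yD by (rule word_in)
      have zD: "z \<in> D" unfolding z_def using RP(2) u by (rule word_in)
      have xw: "op_word Z w u = x" unfolding x_def y_def P_def Q_def by (rule split_word[OF w2 u])
      have "(norm x)^2 = cmod (cinner x x)" by (simp add: cinner_self_eq norm_power)
      also have "\<dots> = cmod (cinner y (op_word Z (rev P) x))"
        unfolding x_def by (rule adjD_E[OF adjD_word[OF P2] yD]) (use xD x_def in simp)
      also have "op_word Z (rev P) x = op_word Z Q z"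
      proof -
        have "op_word Z (rev P) x = op_word Z (rev P @ P) y" by (simp add: x_def op_word_append)
        also have "\<dots> = op_word Z Q (op_word Z (rev P @ P) u)" unfolding y_def
          by (rule comm_words[OF RP(2) Q2 _ u]) (use P_def Q_def in auto)
        finally show ?thesis by (simp add: z_def)
      qed
      also have "cmod (cinner y (op_word Z Q z)) = cmod (cinner (op_word Z Q z) y)"
        by (subst cinner_commute) (simp only: complex_mod_cnj)
      also have "\<dots> = cmod (cinner z (op_word Z (rev Q) y))"
        by (rule adjD_E[OF adjD_word[OF Q2] zD yD])
      also have "op_word Z (rev Q) y = op_word Z (rev Q @ Q) u" by (simp add: y_def op_word_append)
      also have "cmod (cinner z (op_word Z (rev Q @ Q) u)) \<le> norm z * norm (op_word Z (rev Q @ Q) u)"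
        by (rule CS)
      also have "\<dots> \<le> (C1 * B1^(2*length P) * (H^(2*length P) * (p_word (2*n) pp P)^2))
                     * (C2 * B2^(2*length Q) * (H^(2*length Q) * (p_word (2*n) pp Q)^2))"
      proof (rule mult_mono)
        have "norm z \<le> C1 * B1^(length (rev P @ P)) * p_word (2*n) pp (rev P @ P)"
          unfolding z_def using b1 RP(1) by blast
        also have "\<dots> \<le> C1 * B1^(2*length P) * (H^(2*length P) * (p_word (2*n) pp P)^2)"
          using pword_double[OF pppos ppA2 P2] C1 by (simp add: mult_2)
        finally show "norm z \<le> C1 * B1^(2*length P) * (H^(2*length P) * (p_word (2*n) pp P)^2)" .
        have "norm (op_word Z (rev Q @ Q) u) \<le> C2 * B2^(length (rev Q @ Q)) * p_word (2*n) pp (rev Q @ Q)"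
          using b2 RQ by blast
        also have "\<dots> \<le> C2 * B2^(2*length Q) * (H^(2*length Q) * (p_word (2*n) pp Q)^2)"
          using pword_double[OF pppos ppA2 Q2] C2 by (simp add: mult_2)
        finally show "norm (op_word Z (rev Q @ Q) u) \<le> C2 * B2^(2*length Q) * (H^(2*length Q) * (p_word (2*n) pp Q)^2)" .
        show "0 \<le> C1 * B1^(2*length P) * (H^(2*length P) * (p_word (2*n) pp P)^2)"
          using C1 H by simp
      qed simp
      also have "\<dots> = (C1 * C2) * ((B1 * H)^length P)^2 * ((B2 * H)^length Q)^2 * (p_word (2*n) pp P * p_word (2*n) pp Q)^2"
        by (simp add: power_mult_distrib power_mult[symmetric] algebra_simps)
      also have "\<dots> \<le> C^2 * (B^length P)^2 * (B^length Q)^2 * (p_word (2*n) pp P * p_word (2*n) pp Q)^2"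
      proof -
        have "C1 * C2 \<le> C^2" using C C1 C2 by (simp add: power2_eq_square mult_mono)
        moreover have "((B1 * H)^length P)^2 \<le> (B^length P)^2" using B C1 H
          by (intro power_mono) (auto simp: ge1_mult)
        moreover have "((B2 * H)^length Q)^2 \<le> (B^length Q)^2" using B C2 H
          by (intro power_mono) (auto simp: ge1_mult)
        ultimately show ?thesis
          by (intro mult_mono mult_right_mono) (auto simp: C1 C2 less_imp_le)
      qed
      also have "\<dots> = (C * B^(length w) * p_word (2*n) pp w)^2"
      proof -
        have "p_word (2*n) pp w = p_word (2*n) pp P * p_word (2*n) pp Q"
          unfolding P_def Q_def by (rule pword_split[of "2*n" pp, OF pp0])
        moreover have "B^(length w) = B^length P * B^length Q" using len by (simp add: power_add[symmetric])
        ultimately show ?thesis by (simp add: power_mult_distrib)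
      qed
      finally have "(norm x)^2 \<le> (C * B^(length w) * p_word (2*n) pp w)^2" .
      moreover have "C * B^(length w) * p_word (2*n) pp w \<ge> 0"
        using C B pword_pos[OF pppos, of w] by simp
      ultimately show "norm (op_word Z w u) \<le> C * B^(length w) * p_word (2*n) pp w"
        unfolding xw by (rule sq_le_imp)
    qed
  qed
qed

end

lemma dom_word: "(\<forall>l\<in>set \<alpha>. D \<subseteq> Dm l \<and> Zf l ` D \<subseteq> D) \<Longrightarrow> u \<in> D \<Longrightarrow>
   in_dom_word Dm Zf \<alpha> u \<and> op_word Zf \<alpha> u \<in> D"
  by (induction \<alpha>) auto

lemma op_word_joinX: "set \<alpha> \<subseteq> {1..n} \<Longrightarrow> op_word (join_tuple n X Y) \<alpha> v = op_word X \<alpha> v"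
  by (induction \<alpha>) (auto simp: join_tuple_def)

lemma op_word_joinY: "set \<alpha> \<subseteq> {1..n} \<Longrightarrow> op_word (join_tuple n X Y) (map (\<lambda>i. i + n) \<alpha>) v = op_word Y \<alpha> v"
  by (induction \<alpha>) (auto simp: join_tuple_def)

lemma count_idx_map_shift: "count_idx (map (\<lambda>i. i + n) \<alpha>) (l + n) = count_idx \<alpha> l"
  by (induction \<alpha>) (auto simp: count_idx_def)

lemma count_idx_zero: "l \<notin> set \<alpha> \<Longrightarrow> count_idx \<alpha> l = 0"
  by (auto simp: count_idx_def filter_empty_conv)

lemma pword_joinX:
  assumes a: "set \<alpha> \<subseteq> {1..n}" and q0: "\<forall>i\<in>{1..n}. q i 0 = 1"
  shows "p_word (2*n) (join_tuple n m q) \<alpha> = p_word n m \<alpha>"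
proof -
  have "p_word (2*n) (join_tuple n m q) \<alpha> = (\<Prod>l\<in>{1..n}. join_tuple n m q l (count_idx \<alpha> l))"
    unfolding p_word_def
  proof (rule prod.mono_neutral_right)
    show "\<forall>l\<in>{1..2*n} - {1..n}. join_tuple n m q l (count_idx \<alpha> l) = 1"
    proof
      fix l assume l: "l \<in> {1..2*n} - {1..n}"
      hence "count_idx \<alpha> l = 0" using a by (intro count_idx_zero) auto
      moreover have "l - n \<in> {1..n}" "\<not> l \<le> n" using l by auto
      ultimately show "join_tuple n m q l (count_idx \<alpha> l) = 1" using q0 by (simp add: join_tuple_def)
    qed
  qed auto
  also have "\<dots> = p_word n m \<alpha>" unfolding p_word_def by (rule prod.cong) (auto simp: join_tuple_def)
  finally show ?thesis .
qed

lemma pword_joinY: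
  assumes a: "set \<alpha> \<subseteq> {1..n}" and m0: "\<forall>i\<in>{1..n}. m i 0 = 1"
  shows "p_word (2*n) (join_tuple n m q) (map (\<lambda>i. i + n) \<alpha>) = p_word n q \<alpha>"
proof -
  let ?b = "map (\<lambda>i. i + n) \<alpha>"
  have "p_word (2*n) (join_tuple n m q) ?b = (\<Prod>l\<in>{1+n..n+n}. join_tuple n m q l (count_idx ?b l))"
    unfolding p_word_def
  proof (rule prod.mono_neutral_right)
    show "\<forall>l\<in>{1..2*n} - {1+n..n+n}. join_tuple n m q l (count_idx ?b l) = 1"
    proof
      fix l assume l: "l \<in> {1..2*n} - {1+n..n+n}"
      hence "count_idx ?b l = 0" using a by (intro count_idx_zero) auto
      thus "join_tuple n m q l (count_idx ?b l) = 1" using l m0 by (auto simp: join_tuple_def)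
    qed
  qed auto
  also have "\<dots> = (\<Prod>i\<in>{1..n}. join_tuple n m q (i + n) (count_idx ?b (i + n)))"
    by (rule prod.shift_bounds_cl_nat_ivl)
  also have "\<dots> = p_word n q \<alpha>" unfolding p_word_def
    by (rule prod.cong) (auto simp: join_tuple_def count_idx_map_shift)
  finally show ?thesis .
qed

lemma pword_rep:
  assumes i: "i \<in> {1..n}" and m0: "\<forall>j\<in>{1..n}. m j 0 = 1"
  shows "p_word n m (replicate k i) = m i k"
proof -
  have "p_word n m (replicate k i) = (\<Prod>j\<in>{1..n}. if j = i then m i k else 1)"
    unfolding p_word_def by (rule prod.cong) (use m0 in \<open>auto simp: count_idx_replicate\<close>)
  also have "\<dots> = m i k" using i by simp
  finally show ?thesis .
qed

locale opseq = opset +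
  fixes m q :: "nat \<Rightarrow> nat \<Rightarrow> real" and H :: real
  assumes pos: "\<forall>i\<in>{1..n}. \<forall>k. m i k > 0 \<and> q i k > 0"
    and A0: "\<forall>i\<in>{1..n}. cond_A0 (m i) \<and> cond_A0 (q i)"
    and A1: "\<forall>i\<in>{1..n}. cond_A1 (m i) \<and> cond_A1 (q i)"
    and H: "H > 0" "\<forall>i\<in>{1..n}. cond_A2 H (m i) \<and> cond_A2 H (q i)"
    and A3: "\<forall>i\<in>{1..n}. cond_A3 (m i) (q i)"
begin

lemma m0: "\<forall>i\<in>{1..n}. m i 0 = 1" and q0: "\<forall>i\<in>{1..n}. q i 0 = 1"
  using A0 by (auto simp: cond_A0_def)

lemma domX: "\<forall>l\<in>{1..n}. D \<subseteq> DX l \<and> X l ` D \<subseteq> D"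
  using dom(1) by (auto simp: common_invariant_domain_def)
lemma domY: "\<forall>l\<in>{1..n}. D \<subseteq> DY l \<and> Y l ` D \<subseteq> D"
  using dom(2) by (auto simp: common_invariant_domain_def)
lemma domZ: "\<forall>l\<in>{1..2*n}. D \<subseteq> join_tuple n DX DY l \<and> join_tuple n X Y l ` D \<subseteq> D"
proof
  fix l assume l: "l \<in> {1..2*n}"
  show "D \<subseteq> join_tuple n DX DY l \<and> join_tuple n X Y l ` D \<subseteq> D"
  proof (cases "l \<le> n")
    case True thus ?thesis using domX l by (auto simp: join_tuple_def)
  next
    case False
    hence "l - n \<in> {1..n}" using l by auto
    thus ?thesis using domY False by (auto simp: join_tuple_def)
  qed
qed

lemma i_to_ii:
  assumes u: "u \<in> D" and h: "u \<in> S_class (2 * n) (join_tuple n DX DY) (join_tuple n X Y) (join_tuple n m q)"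
  shows "u \<in> S_class n DX X m \<inter> S_class n DY Y q"
proof -
  obtain A C where AC: "A > 0" "C > 0" and b: "\<forall>\<alpha>\<in>multi_indices (2*n).
      norm (op_word (join_tuple n X Y) \<alpha> u) \<le> C * A ^ length \<alpha> * p_word (2*n) (join_tuple n m q) \<alpha>"
    using h unfolding S_class_def by blast
  have dX: "u \<in> C_infty n DX X" unfolding C_infty_def multi_indices_def
    using dom_word[of _ D DX X u] domX u by blast
  have dY: "u \<in> C_infty n DY Y" unfolding C_infty_def multi_indices_def
    using dom_word[of _ D DY Y u] domY u by blast
  have bX: "\<forall>\<alpha>\<in>multi_indices n. norm (op_word X \<alpha> u) \<le> C * A ^ length \<alpha> * p_word n m \<alpha>"
  proof
    fix \<alpha> assume a: "\<alpha> \<in> multi_indices n"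
    hence as: "set \<alpha> \<subseteq> {1..n}" "\<alpha> \<noteq> []" by (auto simp: multi_indices_def)
    have "\<alpha> \<in> multi_indices (2*n)" using as by (auto simp: multi_indices_def)
    hence "norm (op_word (join_tuple n X Y) \<alpha> u) \<le> C * A ^ length \<alpha> * p_word (2*n) (join_tuple n m q) \<alpha>"
      using b by blast
    moreover have e1: "op_word (join_tuple n X Y) \<alpha> u = op_word X \<alpha> u" by (rule op_word_joinX[OF as(1)])
    moreover have e2: "p_word (2*n) (join_tuple n m q) \<alpha> = p_word n m \<alpha>" by (rule pword_joinX[of \<alpha> n q m, OF as(1) q0])
    ultimately show "norm (op_word X \<alpha> u) \<le> C * A ^ length \<alpha> * p_word n m \<alpha>" by simp
  qed
  have bY: "\<forall>\<alpha>\<in>multi_indices n. norm (op_word Y \<alpha> u) \<le> C * A ^ length \<alpha> * p_word n q \<alpha>"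
  proof
    fix \<alpha> assume a: "\<alpha> \<in> multi_indices n"
    hence as: "set \<alpha> \<subseteq> {1..n}" "\<alpha> \<noteq> []" by (auto simp: multi_indices_def)
    have "map (\<lambda>i. i + n) \<alpha> \<in> multi_indices (2*n)" using as by (auto simp: multi_indices_def)
    hence "norm (op_word (join_tuple n X Y) (map (\<lambda>i. i + n) \<alpha>) u) \<le> C * A ^ length (map (\<lambda>i. i + n) \<alpha>) * p_word (2*n) (join_tuple n m q) (map (\<lambda>i. i + n) \<alpha>)"
      using b by blast
    moreover have e1: "op_word (join_tuple n X Y) (map (\<lambda>i. i + n) \<alpha>) u = op_word Y \<alpha> u" by (rule op_word_joinY[OF as(1)])
    moreover have e2: "p_word (2*n) (join_tuple n m q) (map (\<lambda>i. i + n) \<alpha>) = p_word n q \<alpha>" by (rule pword_joinY[of \<alpha> n m q, OF as(1) m0])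
    ultimately show "norm (op_word Y \<alpha> u) \<le> C * A ^ length \<alpha> * p_word n q \<alpha>" by simp
  qed
  show ?thesis unfolding S_class_def using dX dY bX bY AC by blast
qed

lemma powX_in: "u \<in> D \<Longrightarrow> i \<in> {1..n} \<Longrightarrow> (X i ^^ j) u \<in> D"
  using linD_in linD_pow linD_X by blast
lemma powY_in: "u \<in> D \<Longrightarrow> i \<in> {1..n} \<Longrightarrow> (Y i ^^ j) u \<in> D"
  using linD_in linD_pow linD_Y by blast

lemma ii_to_iii:
  assumes u: "u \<in> D" and h: "u \<in> S_class n DX X m \<inter> S_class n DY Y q"
  shows "u \<in> (\<Inter>i\<in>{1..n}. S_single (DX i) (X i) (m i)) \<inter> (\<Inter>i\<in>{1..n}. S_single (DY i) (Y i) (q i))"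
proof -
  obtain A C where AC: "A > 0" "C > 0" and b: "\<forall>\<alpha>\<in>multi_indices n. norm (op_word X \<alpha> u) \<le> C * A ^ length \<alpha> * p_word n m \<alpha>"
    using h unfolding S_class_def by blast
  obtain A' C' where AC': "A' > 0" "C' > 0" and b': "\<forall>\<alpha>\<in>multi_indices n. norm (op_word Y \<alpha> u) \<le> C' * A' ^ length \<alpha> * p_word n q \<alpha>"
    using h unfolding S_class_def by blast
  have "u \<in> S_single (DX i) (X i) (m i)" if i: "i \<in> {1..n}" for i
  proof -
    have d: "\<forall>k. \<forall>j<k. (X i ^^ j) u \<in> DX i" using powX_in[OF u i] domX i by blast
    have "\<forall>k\<ge>1. norm ((X i ^^ k) u) \<le> C * A ^ k * m i k"
    proof (intro allI impI)
      fix k :: nat assume k: "k \<ge> 1"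
      have "replicate k i \<in> multi_indices n" using k i by (auto simp: multi_indices_def)
      thus "norm ((X i ^^ k) u) \<le> C * A ^ k * m i k"
        using b pword_rep[of i n m k, OF i m0] by (auto simp: op_word_rep)
    qed
    thus ?thesis unfolding S_single_def using d AC by blast
  qed
  moreover have "u \<in> S_single (DY i) (Y i) (q i)" if i: "i \<in> {1..n}" for i
  proof -
    have d: "\<forall>k. \<forall>j<k. (Y i ^^ j) u \<in> DY i" using powY_in[OF u i] domY i by blast
    have "\<forall>k\<ge>1. norm ((Y i ^^ k) u) \<le> C' * A' ^ k * q i k"
    proof (intro allI impI)
      fix k :: nat assume k: "k \<ge> 1"
      have "replicate k i \<in> multi_indices n" using k i by (auto simp: multi_indices_def)
      thus "norm ((Y i ^^ k) u) \<le> C' * A' ^ k * q i k"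
        using b' pword_rep[of i n q k, OF i q0] by (auto simp: op_word_rep)
    qed
    thus ?thesis unfolding S_single_def using d AC' by blast
  qed
  ultimately show ?thesis by auto
qed

lemma single_bounds:
  assumes u: "u \<in> D" and i: "i \<in> {1..n}"
    and hx: "u \<in> S_single (DX i) (X i) (m i)" and hy: "u \<in> S_single (DY i) (Y i) (q i)"
  shows "\<exists>C>0. \<exists>A\<ge>1. (\<forall>k. norm ((X i ^^ k) u) \<le> C * A^k * m i k) \<and> (\<forall>k. norm ((Y i ^^ k) u) \<le> C * A^k * q i k)"
proof -
  obtain A1 C1 where a1: "A1 > 0" "C1 > 0" "\<forall>k\<ge>1. norm ((X i ^^ k) u) \<le> C1 * A1 ^ k * m i k"
    using hx unfolding S_single_def by blast
  obtain A2 C2 where a2: "A2 > 0" "C2 > 0" "\<forall>k\<ge>1. norm ((Y i ^^ k) u) \<le> C2 * A2 ^ k * q i k"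
    using hy unfolding S_single_def by blast
  define C where "C = max (max C1 C2) (norm u)"
  define A where "A = max (max A1 A2) 1"
  have C: "C > 0" "C1 \<le> C" "C2 \<le> C" "norm u \<le> C" unfolding C_def using a1 by auto
  have A: "A \<ge> 1" "A1 \<le> A" "A2 \<le> A" unfolding A_def by auto
  have mp: "m i k > 0" "q i k > 0" for k using pos i by auto
  have bx: "norm ((X i ^^ k) u) \<le> C * A^k * m i k" for k
  proof (cases "k = 0")
    case True thus ?thesis using C m0 i by simp
  next
    case False
    hence "norm ((X i ^^ k) u) \<le> C1 * A1 ^ k * m i k" using a1 by auto
    also have "\<dots> \<le> C * A^k * m i k"
      using C A a1 mp(1)[of k] by (intro mult_right_mono mult_mono power_mono) auto
    finally show ?thesis .
  qed
  have by': "norm ((Y i ^^ k) u) \<le> C * A^k * q i k" for k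
  proof (cases "k = 0")
    case True thus ?thesis using C q0 i by simp
  next
    case False
    hence "norm ((Y i ^^ k) u) \<le> C2 * A2 ^ k * q i k" using a2 by auto
    also have "\<dots> \<le> C * A^k * q i k"
      using C A a2 mp(2)[of k] by (intro mult_right_mono mult_mono power_mono) auto
    finally show ?thesis .
  qed
  show ?thesis using C A bx by' by blast
qed

lemma iii_to_i:
  assumes u: "u \<in> D"
    and h: "u \<in> (\<Inter>i\<in>{1..n}. S_single (DX i) (X i) (m i)) \<inter> (\<Inter>i\<in>{1..n}. S_single (DY i) (Y i) (q i))"
  shows "u \<in> S_class (2 * n) (join_tuple n DX DY) (join_tuple n X Y) (join_tuple n m q)"
proof -
  define pp where "pp = join_tuple n m q"
  have ppl: "pp l = (if l \<le> n then m l else q (l - n))" for l by (simp add: pp_def join_tuple_def)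
  have pp0: "\<forall>l\<in>{1..2*n}. pp l 0 = 1"
  proof
    fix l assume l: "l \<in> {1..2*n}"
    show "pp l 0 = 1"
    proof (cases "l \<le> n")
      case True thus ?thesis using l m0 by (simp add: ppl)
    next
      case False
      hence "l - n \<in> {1..n}" using l by auto
      thus ?thesis using False q0 by (simp add: ppl)
    qed
  qed
  have lcase: "l \<le> n \<and> l \<in> {1..n} \<or> \<not> l \<le> n \<and> l - n \<in> {1..n}" if "l \<in> {1..2*n}" for l
    using that by auto
  have pppos: "\<forall>l\<in>{1..2*n}. \<forall>k. pp l k > 0"
  proof (intro ballI allI)
    fix l k assume l: "l \<in> {1..2*n}"
    show "pp l k > 0"
    proof (cases "l \<le> n")
      case True thus ?thesis using l pos by (simp add: ppl)
    next
      case False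
      hence "l - n \<in> {1..n}" using l by auto
      thus ?thesis using False pos by (simp add: ppl)
    qed
  qed
  define H' where "H' = max H 1"
  have H1: "H' \<ge> 1" by (simp add: H'_def)
  have A2mono: "cond_A2 H' f" if "cond_A2 H f" "\<forall>k. f k > 0" for f
    unfolding cond_A2_def
  proof (intro allI)
    fix a b
    have "f (a + b) \<le> H^(a+b) * f a * f b" using that(1) by (simp add: cond_A2_def)
    also have "\<dots> \<le> H'^(a+b) * f a * f b"
      using that(2) H(1) by (intro mult_right_mono power_mono) (auto simp: H'_def less_imp_le)
    finally show "f (a + b) \<le> H'^(a+b) * f a * f b" .
  qed
  have ppA2: "\<forall>l\<in>{1..2*n}. cond_A2 H' (pp l)"
  proof
    fix l assume l: "l \<in> {1..2*n}"
    have "cond_A2 H (pp l)"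
    proof (cases "l \<le> n")
      case True thus ?thesis using l H(2) by (simp add: ppl)
    next
      case False
      hence "l - n \<in> {1..n}" using l by auto
      thus ?thesis using False H(2) by (simp add: ppl)
    qed
    thus "cond_A2 H' (pp l)" using pppos l by (intro A2mono) auto
  qed
  have pb: "\<forall>i\<in>{1..n}. \<exists>C>0. \<exists>B\<ge>1. \<forall>w. set w \<subseteq> {i, i+n} \<longrightarrow>
               norm (op_word Z w u) \<le> C * B^(length w) * p_word (2*n) pp w"
  proof
    fix i assume i: "i \<in> {1..n}"
    obtain C A where CA: "C > 0" "A \<ge> 1" and bx: "\<forall>k. norm ((X i ^^ k) u) \<le> C * A^k * m i k"
        and by': "\<forall>k. norm ((Y i ^^ k) u) \<le> C * A^k * q i k"
      using single_bounds[OF u i] h i by blast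
    have pm: "\<And>k. m i k > 0" and pq: "\<And>k. q i k > 0" using pos i by auto
    have a0: "cond_A0 (m i)" "cond_A0 (q i)" using A0 i by auto
    have a1: "cond_A1 (m i)" "cond_A1 (q i)" using A1 i by auto
    have a2: "cond_A2 H (m i)" "cond_A2 H (q i)" using H(2) i by auto
    have a3: "cond_A3 (m i) (q i)" using A3 i by auto
    have bx': "\<And>k. norm ((X i ^^ k) u) \<le> C * A^k * m i k" using bx by blast
    have by'': "\<And>k. norm ((Y i ^^ k) u) \<le> C * A^k * q i k" using by' by blast
    obtain B where B: "B \<ge> 1" and bw: "\<forall>w. set w \<subseteq> {i, i+n} \<longrightarrow>
       norm (op_word Z w u) \<le> C * B^(length w) * m i (count_idx w i) * q i (count_idx w (i+n))"
      using pair_bound[OF i u pm pq a0 a1 a2 a3 CA(1) CA(2) bx' by''] by blast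
    have "\<forall>w. set w \<subseteq> {i, i+n} \<longrightarrow> norm (op_word Z w u) \<le> C * B^(length w) * p_word (2*n) pp w"
    proof (intro allI impI)
      fix w assume w: "set w \<subseteq> {i, i+n}"
      have "p_word (2*n) pp w = m i (count_idx w i) * q i (count_idx w (i+n))"
        unfolding pp_def by (rule pword_pair[OF i w pp0[unfolded pp_def]])
      thus "norm (op_word Z w u) \<le> C * B^(length w) * p_word (2*n) pp w"
        using bw w by (simp add: mult.assoc)
    qed
    thus "\<exists>C>0. \<exists>B\<ge>1. \<forall>w. set w \<subseteq> {i, i+n} \<longrightarrow> norm (op_word Z w u) \<le> C * B^(length w) * p_word (2*n) pp w"
      using CA B by blast
  qed
  obtain C B where CB: "C > 0" "B \<ge> 1" and bnd: "\<forall>w. set w \<subseteq> {l\<in>{1..2*n}. pr l \<in> {1..n}} \<longrightarrow>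
               norm (op_word Z w u) \<le> C * B^(length w) * p_word (2*n) pp w"
    using multi[OF u order_refl pp0 pppos ppA2 H1 pb] by blast
  have lett: "{l\<in>{1..2*n}. pr l \<in> {1..n}} = {1..2*n}" by (auto simp: pr_def)
  have d: "u \<in> C_infty (2*n) (join_tuple n DX DY) (join_tuple n X Y)" unfolding C_infty_def multi_indices_def
    using dom_word[of _ D "join_tuple n DX DY" "join_tuple n X Y" u] domZ u by blast
  have bb: "\<forall>\<alpha>\<in>multi_indices (2*n). norm (op_word (join_tuple n X Y) \<alpha> u) \<le> C * B ^ length \<alpha> * p_word (2 * n) (join_tuple n m q) \<alpha>"
  proof
    fix \<alpha> assume a: "\<alpha> \<in> multi_indices (2*n)"
    hence as: "set \<alpha> \<subseteq> {1..2*n}" by (auto simp: multi_indices_def)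
    hence "norm (op_word Z \<alpha> u) \<le> C * B^(length \<alpha>) * p_word (2*n) pp \<alpha>" using bnd lett by simp
    thus "norm (op_word (join_tuple n X Y) \<alpha> u) \<le> C * B ^ length \<alpha> * p_word (2 * n) (join_tuple n m q) \<alpha>"
      by (simp add: Z_def pp_def)
  qed
  have "B > 0" using CB by auto
  thus ?thesis unfolding S_class_def using d bb CB by blast
qed

end

theorem corollary2p7:
  fixes n :: nat
    and D :: "'a::chilbert_space set"
    and DX DY :: "nat \<Rightarrow> 'a set"
    and X Y :: "nat \<Rightarrow> 'a \<Rightarrow> 'a"
    and c :: "nat \<Rightarrow> complex"
    and m q :: "nat \<Rightarrow> nat \<Rightarrow> real"
    and H :: real
    and u :: 'a
  assumes ops: "\<forall>i\<in>{1..n}. lin_op (DX i) (X i) \<and> lin_op (DY i) (Y i)"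
    and herm: "\<forall>i\<in>{1..n}. (hermitian (DX i) (X i) \<or> skew_hermitian (DX i) (X i))
                          \<and> (hermitian (DY i) (Y i) \<or> skew_hermitian (DY i) (Y i))"
    and dom: "common_invariant_domain D {1..n} DX X"
             "common_invariant_domain D {1..n} DY Y"
    and comm_XX: "\<forall>i\<in>{1..n}. \<forall>j\<in>{1..n}. \<forall>v\<in>D. X i (X j v) = X j (X i v)"
    and comm_YY: "\<forall>i\<in>{1..n}. \<forall>j\<in>{1..n}. \<forall>v\<in>D. Y i (Y j v) = Y j (Y i v)"
    and comm_XY: "\<forall>i\<in>{1..n}. \<forall>j\<in>{1..n}. i \<noteq> j \<longrightarrow> (\<forall>v\<in>D. X i (Y j v) = Y j (X i v))"
    and comm_XYi: "\<forall>i\<in>{1..n}. c i \<noteq> 0 \<and> (\<forall>v\<in>D. X i (Y i v) - Y i (X i v) = c i *\<^sub>C v)"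
    and pos: "\<forall>i\<in>{1..n}. \<forall>k. m i k > 0 \<and> q i k > 0"
    and A0: "\<forall>i\<in>{1..n}. cond_A0 (m i) \<and> cond_A0 (q i)"
    and A1: "\<forall>i\<in>{1..n}. cond_A1 (m i) \<and> cond_A1 (q i)"
    and H: "H > 0" "\<forall>i\<in>{1..n}. cond_A2 H (m i) \<and> cond_A2 H (q i)"
    and A3: "\<forall>i\<in>{1..n}. cond_A3 (m i) (q i)"
    and u: "u \<in> D"
  shows "(u \<in> S_class (2 * n) (join_tuple n DX DY) (join_tuple n X Y) (join_tuple n m q)
            \<longleftrightarrow> u \<in> S_class n DX X m \<inter> S_class n DY Y q)
       \<and> (u \<in> S_class n DX X m \<inter> S_class n DY Y q
            \<longleftrightarrow> u \<in> (\<Inter>i\<in>{1..n}. S_single (DX i) (X i) (m i)) \<inter> (\<Inter>i\<in>{1..n}. S_single (DY i) (Y i) (q i)))"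
proof -
  interpret opseq n D DX DY X Y c m q H
    by unfold_locales (fact ops herm dom comm_XX comm_YY comm_XY comm_XYi pos A0 A1 H A3)+
  have 1: "u \<in> S_class (2 * n) (join_tuple n DX DY) (join_tuple n X Y) (join_tuple n m q)
            \<Longrightarrow> u \<in> S_class n DX X m \<inter> S_class n DY Y q" by (rule i_to_ii[OF u])
  have 2: "u \<in> S_class n DX X m \<inter> S_class n DY Y q \<Longrightarrow>
     u \<in> (\<Inter>i\<in>{1..n}. S_single (DX i) (X i) (m i)) \<inter> (\<Inter>i\<in>{1..n}. S_single (DY i) (Y i) (q i))"
    by (rule ii_to_iii[OF u])
  have 3: "u \<in> (\<Inter>i\<in>{1..n}. S_single (DX i) (X i) (m i)) \<inter> (\<Inter>i\<in>{1..n}. S_single (DY i) (Y i) (q i))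
     \<Longrightarrow> u \<in> S_class (2 * n) (join_tuple n DX DY) (join_tuple n X Y) (join_tuple n m q)"
    by (rule iii_to_i[OF u])
  show ?thesis using 1 2 3 by blast
qed

end
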